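(* Let $a_0,a_1,a_2,b_0,b_1,b_2$ be real numbers and consider the Abel equation $$\frac{dx}{dt}=(a_0+a_1\cos(2\pi t)+a_2\sin(2\pi t))x^3+(b_0+b_1\cos(2\pi t)+b_2\sin(2\pi t))x^2 .$$ (a) The equation has a center at $x=0$ if and only if $a_0=b_0=a_2b_1-a_1b_2=0$. (b) If the equation does not have a center at $x=0$ and one of the conditions $a_0^2\ge a_1^2+a_2^2$, $b_0^2\ge b_1^2+b_2^2$, or $(a_2b_0-a_0b_2)^2+(a_0b_1-a_1b_0)^2\ge (a_2b_1-a_1b_2)^2$ holds, then it has at most one non-zero periodic orbit, and when this periodic orbit exists it is hyperbolic. (c) There exist choices of $a_0,a_1,a_2,b_0,b_1,b_2$ for which the equation has at least two non-zero hyperbolic periodic orbits.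
   Context: The equation is considered on the strip $[0,1]\times\mathbb{R}$. A periodic orbit is a solution $x(t)$ defined on all of $[0,1]$ with $x(0)=x(1)$; $x\equiv0$ is always one, and non-zero periodic orbits are the others. The Poincaré map is $\Pi(x_0)=x(1;x_0)$ where $x(t;x_0)$ is the solution with $x(0;x_0)=x_0$; a periodic orbit with initial condition $x_0$ is hyperbolic if $\Pi'(x_0)\ne1$. The equation has a center at the periodic orbit $x=0$ if there is a neighborhood of $0$ such that every solution starting at $t=0$ in this neighborhood is a periodic orbit. *)

theory Defs
  imports "HOL-Analysis.Analysis"
begin

definition abel_rhs :: "real \<Rightarrow> real \<Rightarrow> real \<Rightarrow> real \<Rightarrow> real \<Rightarrow> real \<Rightarrow> real \<Rightarrow> real \<Rightarrow> real" where
  "abel_rhs a0 a1 a2 b0 b1 b2 t x =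
     (a0 + a1 * cos (2 * pi * t) + a2 * sin (2 * pi * t)) * x ^ 3
   + (b0 + b1 * cos (2 * pi * t) + b2 * sin (2 * pi * t)) * x ^ 2"

definition abel_solution :: "real \<Rightarrow> real \<Rightarrow> real \<Rightarrow> real \<Rightarrow> real \<Rightarrow> real \<Rightarrow> (real \<Rightarrow> real) \<Rightarrow> bool" where
  "abel_solution a0 a1 a2 b0 b1 b2 x \<longleftrightarrow>
     (\<forall>t\<in>{0..1}. (x has_real_derivative abel_rhs a0 a1 a2 b0 b1 b2 t (x t)) (at t within {0..1}))"

definition abel_periodic_orbit :: "real \<Rightarrow> real \<Rightarrow> real \<Rightarrow> real \<Rightarrow> real \<Rightarrow> real \<Rightarrow> (real \<Rightarrow> real) \<Rightarrow> bool" where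
  "abel_periodic_orbit a0 a1 a2 b0 b1 b2 x \<longleftrightarrow>
     abel_solution a0 a1 a2 b0 b1 b2 x \<and> x 0 = x 1"

definition nonzero_orbit :: "(real \<Rightarrow> real) \<Rightarrow> bool" where
  "nonzero_orbit x \<longleftrightarrow> (\<exists>t\<in>{0..1}. x t \<noteq> 0)"

definition abel_poincare :: "real \<Rightarrow> real \<Rightarrow> real \<Rightarrow> real \<Rightarrow> real \<Rightarrow> real \<Rightarrow> real \<Rightarrow> real" where
  "abel_poincare a0 a1 a2 b0 b1 b2 x0 =
     (THE y. \<exists>x. abel_solution a0 a1 a2 b0 b1 b2 x \<and> x 0 = x0 \<and> x 1 = y)"

definition abel_hyperbolic :: "real \<Rightarrow> real \<Rightarrow> real \<Rightarrow> real \<Rightarrow> real \<Rightarrow> real \<Rightarrow> real \<Rightarrow> bool" where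
  "abel_hyperbolic a0 a1 a2 b0 b1 b2 x0 \<longleftrightarrow>
     (\<exists>D. (abel_poincare a0 a1 a2 b0 b1 b2 has_real_derivative D) (at x0) \<and> D \<noteq> 1)"

definition abel_center :: "real \<Rightarrow> real \<Rightarrow> real \<Rightarrow> real \<Rightarrow> real \<Rightarrow> real \<Rightarrow> bool" where
  "abel_center a0 a1 a2 b0 b1 b2 \<longleftrightarrow>
     (\<exists>e>0. \<forall>x0. \<bar>x0\<bar> < e \<longrightarrow>
        (\<exists>x. abel_periodic_orbit a0 a1 a2 b0 b1 b2 x \<and> x 0 = x0))"

end

theory Submission
  imports Defs
begin

lemma mono_deriv:
  fixes f :: "real \<Rightarrow> real"
  assumes d: "\<And>t. t \<in> {a..b} \<Longrightarrow> (f has_real_derivative f' t) (at t within {a..b})"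
    and nn: "\<And>t. t \<in> {a..b} \<Longrightarrow> f' t \<ge> 0" and "a \<le> s" "s \<le> t" "t \<le> b"
  shows "f s \<le> f t"
proof -
  have c: "continuous_on {a..b} f" by (rule DERIV_continuous_on[OF d])
  show ?thesis
  proof (rule DERIV_nonneg_imp_increasing_open[OF \<open>s \<le> t\<close>])
    fix x assume x: "s < x" "x < t"
    then have "a < x" "x < b" using assms by auto
    then have "(f has_real_derivative f' x) (at x)"
      using d[of x] at_within_Icc_at[of a x b] by auto
    then show "\<exists>y. (f has_real_derivative y) (at x) \<and> 0 \<le> y" using nn[of x] \<open>a < x\<close> \<open>x < b\<close> by auto
  next
    show "continuous_on {s..t} f" using c by (rule continuous_on_subset) (use assms in auto)
  qed
qed

lemma lin_ode:
  fixes z g :: "real \<Rightarrow> real"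
  assumes d: "\<And>t. t \<in> {0..1} \<Longrightarrow> (z has_real_derivative g t * z t) (at t within {0..1})"
    and g: "continuous_on {0..1} g" and t: "t \<in> {0..1}"
  shows "z t = z 0 * exp (integral {0..t} g)"
proof -
  define \<phi> where "\<phi> s = z s * exp (- integral {0..s} g)" for s
  have I: "((\<lambda>s. integral {0..s} g) has_real_derivative g s) (at s within {0..1})" if "s \<in> {0..1}" for s
    by (rule integral_has_real_derivative[OF g that])
  have "(\<phi> has_real_derivative 0) (at s within {0..1})" if s: "s \<in> {0..1}" for s
  proof -
    show ?thesis unfolding \<phi>_def
      by (rule derivative_eq_intros d[OF s] I[OF s] refl | simp add: algebra_simps)+
  qed
  then obtain c where c: "\<forall>s\<in>{0..1}. \<phi> s = c"
    using has_field_derivative_zero_constant[of "{0..1::real}" \<phi>] by auto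
  have "\<phi> t = \<phi> 0" using c t by auto
  then have "z t * exp (- integral {0..t} g) = z 0" by (simp add: \<phi>_def)
  then show ?thesis by (simp add: exp_minus field_simps)
qed

lemma ftc_real:
  fixes f :: "real \<Rightarrow> real"
  assumes "a \<le> b" "\<And>t. t \<in> {a..b} \<Longrightarrow> (f has_real_derivative f' t) (at t within {a..b})"
  shows "(f' has_integral f b - f a) {a..b}"
  using assms by (intro fundamental_theorem_of_calculus) (auto simp: has_real_derivative_iff_has_vector_derivative)

lemma cont_bounded:
  fixes f :: "real \<Rightarrow> real"
  assumes "continuous_on {a..b} f"
  obtains K where "K \<ge> 0" "\<And>t. t \<in> {a..b} \<Longrightarrow> \<bar>f t\<bar> \<le> K"
proof -
  have "bounded (f ` {a..b})" by (intro compact_imp_bounded compact_continuous_image assms) auto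
  then obtain K where "\<forall>y\<in>f ` {a..b}. \<bar>y\<bar> \<le> K" by (auto simp: bounded_real)
  then show ?thesis using that[of "max K 0"] by force
qed

lemma gronwall_sq:
  fixes z :: "real \<Rightarrow> real"
  assumes d: "\<And>t. t \<in> {0..1} \<Longrightarrow> (z has_real_derivative z' t) (at t within {0..1})"
    and b: "\<And>t. t \<in> {0..1} \<Longrightarrow> \<bar>z' t\<bar> \<le> L * \<bar>z t\<bar>" and t: "t \<in> {0..1}"
  shows "\<bar>z t\<bar> \<le> \<bar>z 0\<bar> * exp (L * t)"
proof -
  define \<phi> where "\<phi> s = - (z s ^ 2 * exp (- (2 * L) * s))" for s
  have dd: "(\<phi> has_real_derivative - (2 * z s * z' s * exp (- (2 * L) * s) + z s ^ 2 * (exp (- (2 * L) * s) * (- (2 * L))))) (at s within {0..1})"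
    if s: "s \<in> {0..1}" for s
    unfolding \<phi>_def
    by (rule derivative_eq_intros d[OF s] refl | simp)+
  have nn: "0 \<le> - (2 * z s * z' s * exp (- (2 * L) * s) + z s ^ 2 * (exp (- (2 * L) * s) * (- (2 * L))))"
    if s: "s \<in> {0..1}" for s
  proof -
    have "z s * z' s \<le> L * z s ^ 2"
    proof -
      have "z s * z' s \<le> \<bar>z s\<bar> * \<bar>z' s\<bar>" by (simp add: abs_mult[symmetric])
      also have "\<dots> \<le> \<bar>z s\<bar> * (L * \<bar>z s\<bar>)" by (intro mult_left_mono b s) auto
      also have "\<dots> = L * z s ^ 2" by (simp add: power2_eq_square algebra_simps)
      finally show ?thesis .
    qed
    then have "2 * z s * z' s * exp (- (2 * L) * s) \<le> 2 * L * z s ^ 2 * exp (- (2 * L) * s)"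
      by (intro mult_right_mono) auto
    then show ?thesis by (simp add: algebra_simps)
  qed
  have "\<phi> 0 \<le> \<phi> t" using t by (intro mono_deriv[OF dd nn]) auto
  then have "z t ^ 2 * exp (- (2 * L) * t) \<le> z 0 ^ 2" by (simp add: \<phi>_def)
  then have "z t ^ 2 \<le> z 0 ^ 2 * exp (2 * L * t)"
    by (simp add: exp_minus field_simps)
  also have "\<dots> = (\<bar>z 0\<bar> * exp (L * t)) ^ 2"
    by (simp add: power_mult_distrib exp_double[symmetric] mult.assoc)
  finally have "\<bar>z t\<bar> ^ 2 \<le> (\<bar>z 0\<bar> * exp (L * t)) ^ 2" by simp
  then show ?thesis by (rule power2_le_imp_le) auto
qed

lemma int_comp_zero:
  fixes x h :: "real \<Rightarrow> real"
  assumes d: "\<And>t. t \<in> {0..1} \<Longrightarrow> (x has_real_derivative x' t) (at t within {0..1})"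
    and per: "x 0 = x 1"
    and rng: "\<And>t. t \<in> {0..1} \<Longrightarrow> x t \<in> {m..M}"
    and h: "continuous_on {m..M} h"
  shows "((\<lambda>t. h (x t) * x' t) has_integral 0) {0..1}"
proof -
  define H where "H u = integral {m..u} h" for u
  have D: "((H \<circ> x) has_real_derivative h (x t) * x' t) (at t within {0..1})" if t: "t \<in> {0..1}" for t
  proof (rule DERIV_image_chain)
    have "(H has_real_derivative h (x t)) (at (x t) within {m..M})"
      unfolding H_def by (rule integral_has_real_derivative[OF h rng[OF t]])
    then show "(H has_real_derivative h (x t)) (at (x t) within x ` {0..1})"
      by (rule DERIV_subset) (use rng in auto)
  qed (rule d[OF t])
  have "((\<lambda>t. h (x t) * x' t) has_integral (H \<circ> x) 1 - (H \<circ> x) 0) {0..1}"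
    by (rule ftc_real) (use D in \<open>auto simp: o_def\<close>)
  then show ?thesis using per by (simp add: o_def)
qed

lemma int_pos:
  fixes f :: "real \<Rightarrow> real"
  assumes c: "continuous_on {0..1} f" and nn: "\<And>t. t \<in> {0..1} \<Longrightarrow> f t \<ge> 0"
    and t0: "t0 \<in> {0..1}" "f t0 > 0"
  shows "integral {0..1} f > 0"
proof -
  have int: "f integrable_on {0..1}" using c by (rule integrable_continuous_interval)
  have ge: "integral {0..1} f \<ge> 0" by (rule integral_nonneg[OF int nn])
  show ?thesis
  proof (rule ccontr)
    assume "\<not> ?thesis"
    then have "integral {0..1} f = 0" using ge by auto
    then have I0: "(f has_integral 0) (cbox 0 1)" using int by (simp add: cbox_interval has_integral_integral)
    have "f t0 = 0"
      by (rule has_integral_0_cbox_imp_0[OF _ _ I0]) (use c nn t0 in \<open>auto simp: cbox_interval box_real\<close>)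
    then show False using t0 by simp
  qed
qed

lemma int_power_0t:
  fixes t :: real and n :: nat
  assumes "t \<ge> 0"
  shows "((\<lambda>s. s ^ n) has_integral t ^ Suc n / real (Suc n)) {0..t}"
proof -
  have "((\<lambda>s. s ^ n) has_integral (\<lambda>s. s ^ Suc n / real (Suc n)) t - (\<lambda>s. s ^ Suc n / real (Suc n)) 0) {0..t}"
    by (rule ftc_real[OF assms]) (rule derivative_eq_intros refl | simp)+
  then show ?thesis by simp
qed

lemma cont_integrable_sub:
  fixes g :: "real \<Rightarrow> real"
  assumes "continuous_on {0..1} g" "t \<in> {0..1}"
  shows "g integrable_on {0..t}"
  using assms by (intro integrable_continuous_interval continuous_on_subset[OF assms(1)]) auto

lemma cont_indef_integral:
  fixes g :: "real \<Rightarrow> real"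
  assumes "continuous_on {0..1} g"
  shows "continuous_on {0..1} (\<lambda>t. c + integral {0..t} g)"
proof -
  have "continuous_on {0..1} (\<lambda>t. integral {0..t} g)"
    by (rule DERIV_continuous_on[OF integral_has_real_derivative[OF assms]])
  then show ?thesis by (intro continuous_intros)
qed

lemma abs_integral_bound:
  fixes f g :: "real \<Rightarrow> real"
  assumes "f integrable_on S" "g integrable_on S" "\<And>x. x \<in> S \<Longrightarrow> \<bar>f x\<bar> \<le> g x"
  shows "\<bar>integral S f\<bar> \<le> integral S g"
  using integral_norm_bound_integral[of f S g] assms by simp

lemma picard:
  fixes F :: "real \<Rightarrow> real \<Rightarrow> real"
  assumes cont: "\<And>\<phi>. continuous_on {0..1} \<phi> \<Longrightarrow> continuous_on {0..1} (\<lambda>s. F s (\<phi> s))"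
    and lip: "\<And>s u v. s \<in> {0..1} \<Longrightarrow> \<bar>F s u - F s v\<bar> \<le> L * \<bar>u - v\<bar>" and L: "L \<ge> 0"
  shows "\<exists>x. x 0 = \<xi> \<and> (\<forall>t\<in>{0..1}. (x has_real_derivative F t (x t)) (at t within {0..1}))"
proof -
  define P where "P = rec_nat (\<lambda>t. \<xi>) (\<lambda>n p t. \<xi> + integral {0..t} (\<lambda>s. F s (p s)))"
  have P0: "P 0 = (\<lambda>t. \<xi>)" by (simp add: P_def)
  have PS: "P (Suc n) = (\<lambda>t. \<xi> + integral {0..t} (\<lambda>s. F s (P n s)))" for n by (simp add: P_def)
  have Pc: "continuous_on {0..1} (P n)" for n
  proof (induction n)
    case 0 then show ?case by (simp add: P0)
  next
    case (Suc n) then show ?case unfolding PS by (intro cont_indef_integral cont)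
  qed
  have Fc: "continuous_on {0..1} (\<lambda>s. F s (P n s))" for n by (rule cont[OF Pc])
  obtain K where K: "K \<ge> 0" "\<And>s. s \<in> {0..1} \<Longrightarrow> \<bar>F s \<xi>\<bar> \<le> K"
    using cont_bounded[OF cont[of "\<lambda>_. \<xi>"]] by auto
  have bnd: "\<bar>P (Suc n) t - P n t\<bar> \<le> K * (L ^ n * t ^ n / fact n)" if t: "t \<in> {0..1}" for n t
    using t
  proof (induction n arbitrary: t)
    case 0
    have "\<bar>P (Suc 0) t - P 0 t\<bar> = \<bar>integral {0..t} (\<lambda>s. F s \<xi>)\<bar>" by (simp add: PS P0)
    also have "\<dots> \<le> integral {0..t} (\<lambda>s. K)"
    proof -
      have "norm (integral {0..t} (\<lambda>s. F s \<xi>)) \<le> integral {0..t} (\<lambda>s. K)"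
        by (rule integral_norm_bound_integral) (use 0 K Fc[of 0] in \<open>auto simp: P0 intro: cont_integrable_sub\<close>)
      then show ?thesis by simp
    qed
    also have "\<dots> = K * t" using 0 by simp
    also have "\<dots> \<le> K" using 0 K by (simp add: mult_left_le)
    finally show ?case by simp
  next
    case (Suc n)
    have "P (Suc (Suc n)) t - P (Suc n) t = integral {0..t} (\<lambda>s. F s (P (Suc n) s)) - integral {0..t} (\<lambda>s. F s (P n s))"
      by (simp add: PS)
    also have "\<dots> = integral {0..t} (\<lambda>s. F s (P (Suc n) s) - F s (P n s))"
      by (rule integral_diff[symmetric]) (use Suc.prems Fc in \<open>auto intro: cont_integrable_sub\<close>)
    finally have eq: "P (Suc (Suc n)) t - P (Suc n) t = integral {0..t} (\<lambda>s. F s (P (Suc n) s) - F s (P n s))" .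
    have hi: "((\<lambda>s. L * (K * (L ^ n / fact n)) * s ^ n) has_integral L * (K * (L ^ n / fact n)) * (t ^ Suc n / real (Suc n))) {0..t}"
      using Suc.prems by (intro has_integral_mult_right int_power_0t) auto
    have "\<bar>integral {0..t} (\<lambda>s. F s (P (Suc n) s) - F s (P n s))\<bar> \<le> integral {0..t} (\<lambda>s. L * (K * (L ^ n / fact n)) * s ^ n)"
    proof (intro abs_integral_bound)
      show "(\<lambda>s. F s (P (Suc n) s) - F s (P n s)) integrable_on {0..t}"
        using Suc.prems Fc by (intro integrable_diff) (auto intro: cont_integrable_sub)
      show "(\<lambda>s. L * (K * (L ^ n / fact n)) * s ^ n) integrable_on {0..t}"
        using hi by blast
      fix s assume s: "s \<in> {0..t}"
      then have s1: "s \<in> {0..1}" using Suc.prems by auto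
      have "\<bar>F s (P (Suc n) s) - F s (P n s)\<bar> \<le> L * \<bar>P (Suc n) s - P n s\<bar>" by (rule lip[OF s1])
      also have "\<dots> \<le> L * (K * (L ^ n * s ^ n / fact n))" by (intro mult_left_mono Suc.IH s1 L)
      finally show "\<bar>F s (P (Suc n) s) - F s (P n s)\<bar> \<le> L * (K * (L ^ n / fact n)) * s ^ n" by simp
    qed
    also have "\<dots> = L * (K * (L ^ n / fact n)) * (t ^ Suc n / real (Suc n))" using hi by (rule integral_unique)
    also have "\<dots> = K * (L ^ Suc n * t ^ Suc n / fact (Suc n))" by (simp add: field_simps)
    finally show ?case using eq by simp
  qed
  define e where "e n = K * (L ^ n / fact n)" for n
  have e_nn: "e n \<ge> 0" for n using K L by (simp add: e_def)
  have bnd1: "\<bar>P (Suc n) t - P n t\<bar> \<le> e n" if t: "t \<in> {0..1}" for n t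
  proof -
    have "t ^ n \<le> 1" using t by (auto intro: power_le_one)
    then have "L ^ n * t ^ n / fact n \<le> L ^ n / fact n" using L
      by (intro divide_right_mono) (auto intro: mult_left_le)
    then show ?thesis using bnd[OF t, of n] K unfolding e_def
      by (meson mult_left_mono order_trans)
  qed
  have se: "summable e"
  proof -
    have "summable (\<lambda>n. K * (inverse (fact n) * L ^ n))" by (intro summable_mult summable_exp)
    moreover have "(\<lambda>n. K * (inverse (fact n) * L ^ n)) = e"
      by (simp add: e_def fun_eq_iff divide_inverse mult.commute)
    ultimately show ?thesis by simp
  qed
  define d where "d n t = P (Suc n) t - P n t" for n t
  have sd: "summable (\<lambda>n. d n t)" if t: "t \<in> {0..1}" for t
    by (rule summable_comparison_test[OF _ se]) (use bnd1[OF t] d_def in auto)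
  define x where "x t = \<xi> + suminf (\<lambda>n. d n t)" for t
  define \<epsilon> where "\<epsilon> n = suminf e - (\<Sum>k<n. e k)" for n
  have \<epsilon>0: "\<epsilon> \<longlonglongrightarrow> 0"
  proof -
    have "(\<lambda>n. \<Sum>k<n. e k) \<longlonglongrightarrow> suminf e" by (rule summable_LIMSEQ[OF se])
    then have "(\<lambda>n. suminf e - (\<Sum>k<n. e k)) \<longlonglongrightarrow> suminf e - suminf e" by (intro tendsto_intros)
    moreover have "(\<lambda>n. suminf e - (\<Sum>k<n. e k)) = \<epsilon>" by (simp add: \<epsilon>_def fun_eq_iff)
    ultimately show ?thesis by simp
  qed
  have tail: "\<bar>x t - P n t\<bar> \<le> \<epsilon> n" if t: "t \<in> {0..1}" for t n
  proof -
    have tel: "P n t = \<xi> + (\<Sum>k<n. d k t)"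
      using sum_lessThan_telescope[of "\<lambda>k. P k t" n] by (simp add: d_def P0)
    have "x t - P n t = suminf (\<lambda>n. d n t) - (\<Sum>k<n. d k t)" by (simp add: x_def tel)
    also have "\<dots> = (\<Sum>k. d (k + n) t)" using suminf_split_initial_segment[OF sd[OF t], of n] by simp
    finally have eq1: "x t - P n t = (\<Sum>k. d (k + n) t)" .
    have eq2: "\<epsilon> n = (\<Sum>k. e (k + n))" using suminf_split_initial_segment[OF se, of n] by (simp add: \<epsilon>_def)
    have s1: "summable (\<lambda>k. d (k + n) t)" using sd[OF t] by (rule summable_ignore_initial_segment)
    have s2: "summable (\<lambda>k. e (k + n))" using se by (rule summable_ignore_initial_segment)
    have "(\<Sum>k. d (k + n) t) \<le> (\<Sum>k. e (k + n))"
      by (rule suminf_le[OF _ s1 s2]) (use bnd1[OF t] d_def in \<open>auto simp: abs_le_iff\<close>)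
    moreover have "- (\<Sum>k. d (k + n) t) \<le> (\<Sum>k. e (k + n))"
    proof -
      have "- (\<Sum>k. d (k + n) t) = (\<Sum>k. - d (k + n) t)" by (rule suminf_minus[OF s1, symmetric])
      also have "\<dots> \<le> (\<Sum>k. e (k + n))"
        by (rule suminf_le[OF _ summable_minus[OF s1] s2]) (use bnd1[OF t] d_def in \<open>auto simp: abs_le_iff\<close>)
      finally show ?thesis .
    qed
    ultimately show ?thesis using eq1 eq2 by auto
  qed
  have xc: "continuous_on {0..1} x"
  proof (rule uniform_limit_theorem[where F=sequentially and f=P])
    show "\<forall>\<^sub>F n in sequentially. continuous_on {0..1} (P n)" using Pc by simp
    show "uniform_limit {0..1} P x sequentially"
    proof (rule uniform_limitI)
      fix r :: real assume r: "r > 0"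
      have "\<forall>\<^sub>F n in sequentially. \<epsilon> n < r" using order_tendstoD(2)[OF \<epsilon>0 r] .
      then show "\<forall>\<^sub>F n in sequentially. \<forall>t\<in>{0..1}. dist (P n t) (x t) < r"
      proof eventually_elim
        case (elim n)
        show ?case
        proof
          fix t :: real assume t: "t \<in> {0..1}"
          have "\<bar>x t - P n t\<bar> \<le> \<epsilon> n" by (rule tail[OF t])
          then show "dist (P n t) (x t) < r" using elim by (simp add: dist_real_def abs_minus_commute)
        qed
      qed
    qed
  qed simp
  have xF: "continuous_on {0..1} (\<lambda>s. F s (x s))" by (rule cont[OF xc])
  have inteq: "x t = \<xi> + integral {0..t} (\<lambda>s. F s (x s))" if t: "t \<in> {0..1}" for t
  proof -
    let ?D = "\<bar>x t - (\<xi> + integral {0..t} (\<lambda>s. F s (x s)))\<bar>"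
    have "?D \<le> \<epsilon> (Suc n) + L * \<epsilon> n" for n
    proof -
      have i1: "integral {0..t} (\<lambda>s. F s (P n s)) - integral {0..t} (\<lambda>s. F s (x s)) = integral {0..t} (\<lambda>s. F s (P n s) - F s (x s))"
        by (rule integral_diff[symmetric]) (use t Fc xF in \<open>auto intro: cont_integrable_sub\<close>)
      have "\<bar>integral {0..t} (\<lambda>s. F s (P n s) - F s (x s))\<bar> \<le> integral {0..t} (\<lambda>s. L * \<epsilon> n)"
      proof (intro abs_integral_bound)
        show "(\<lambda>s. F s (P n s) - F s (x s)) integrable_on {0..t}"
          using t Fc xF by (intro integrable_diff) (auto intro: cont_integrable_sub)
        fix s assume s: "s \<in> {0..t}"
        then have s1: "s \<in> {0..1}" using t by auto
        have "\<bar>F s (P n s) - F s (x s)\<bar> \<le> L * \<bar>P n s - x s\<bar>" by (rule lip[OF s1])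
        also have "\<dots> \<le> L * \<epsilon> n" using tail[OF s1, of n] L by (intro mult_left_mono) (auto simp: abs_minus_commute)
        finally show "\<bar>F s (P n s) - F s (x s)\<bar> \<le> L * \<epsilon> n" .
      qed auto
      also have "\<dots> = L * \<epsilon> n * t" using t by simp
      also have "\<dots> \<le> L * \<epsilon> n"
      proof -
        have "\<epsilon> n \<ge> 0" using tail[OF t, of n] by linarith
        then show ?thesis using t L by (auto intro: mult_left_le)
      qed
      finally have b2: "\<bar>integral {0..t} (\<lambda>s. F s (P n s)) - integral {0..t} (\<lambda>s. F s (x s))\<bar> \<le> L * \<epsilon> n"
        using i1 by simp
      have "x t - (\<xi> + integral {0..t} (\<lambda>s. F s (x s))) = (x t - P (Suc n) t) + (integral {0..t} (\<lambda>s. F s (P n s)) - integral {0..t} (\<lambda>s. F s (x s)))"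
        by (simp add: PS)
      then show ?thesis using tail[OF t, of "Suc n"] b2 by linarith
    qed
    moreover have "(\<lambda>n. \<epsilon> (Suc n) + L * \<epsilon> n) \<longlonglongrightarrow> 0 + L * 0"
      by (intro tendsto_intros \<epsilon>0[THEN LIMSEQ_Suc] \<epsilon>0)
    ultimately have "?D \<le> 0" by (intro LIMSEQ_le_const[where X="\<lambda>n. \<epsilon> (Suc n) + L * \<epsilon> n"]) auto
    then show ?thesis by simp
  qed
  define y where "y t = \<xi> + integral {0..t} (\<lambda>s. F s (x s))" for t
  have "(y has_real_derivative F t (y t)) (at t within {0..1})" if t: "t \<in> {0..1}" for t
  proof -
    have "(y has_real_derivative F t (x t)) (at t within {0..1})"
      unfolding y_def by (rule derivative_eq_intros integral_has_real_derivative[OF xF t] refl | simp)+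
    then show ?thesis using inteq[OF t] by (simp add: y_def)
  qed
  moreover have "y 0 = \<xi>" by (simp add: y_def)
  ultimately show ?thesis by blast
qed

lemma clamp_lip: fixes a b u v :: real assumes "a \<le> b" shows "\<bar>max a (min b u) - max a (min b v)\<bar> \<le> \<bar>u - v\<bar>"
  using assms unfolding max_def min_def by (cases "u \<le> b"; cases "v \<le> b"; cases "a \<le> u"; cases "a \<le> v") auto

lemma poly_bound: fixes p q a b K M :: real
  assumes p: "\<bar>p\<bar> \<le> M" and q: "\<bar>q\<bar> \<le> M" and a: "\<bar>a\<bar> \<le> K" and b: "\<bar>b\<bar> \<le> K"
  shows "\<bar>a*(p^2+p*q+q^2) + b*(p+q)\<bar> \<le> 3*K*M^2 + 2*K*M"
proof -
  have M: "M \<ge> 0" using p by linarith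
  have K: "K \<ge> 0" using a by linarith
  have pp: "\<bar>p\<bar> * \<bar>p\<bar> \<le> M * M" using p by (intro mult_mono) auto
  have pq: "\<bar>p\<bar> * \<bar>q\<bar> \<le> M * M" using p q by (intro mult_mono) auto
  have qq: "\<bar>q\<bar> * \<bar>q\<bar> \<le> M * M" using q by (intro mult_mono) auto
  have X: "\<bar>p^2+p*q+q^2\<bar> \<le> 3*M^2"
  proof -
    have "\<bar>p^2+p*q+q^2\<bar> \<le> \<bar>p^2\<bar> + \<bar>p*q\<bar> + \<bar>q^2\<bar>"
      by (rule order_trans[OF abs_triangle_ineq add_right_mono[OF abs_triangle_ineq]])
    also have "\<dots> = \<bar>p\<bar> * \<bar>p\<bar> + \<bar>p\<bar> * \<bar>q\<bar> + \<bar>q\<bar> * \<bar>q\<bar>" by (simp add: abs_mult power2_eq_square)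
    also have "\<dots> \<le> 3 * M^2" using pp pq qq by (simp add: power2_eq_square)
    finally show ?thesis .
  qed
  have Y: "\<bar>p+q\<bar> \<le> 2*M" using p q by linarith
  have "\<bar>a*(p^2+p*q+q^2) + b*(p+q)\<bar> \<le> \<bar>a*(p^2+p*q+q^2)\<bar> + \<bar>b*(p+q)\<bar>"
    by (rule abs_triangle_ineq)
  also have "\<dots> = \<bar>a\<bar>*\<bar>p^2+p*q+q^2\<bar> + \<bar>b\<bar>*\<bar>p+q\<bar>" by (simp add: abs_mult)
  also have "\<dots> \<le> K * (3*M^2) + K * (2*M)"
    using X Y a b K M by (intro add_mono mult_mono) auto
  finally show ?thesis by simp
qed

definition trig :: "real \<Rightarrow> real \<Rightarrow> real \<Rightarrow> real \<Rightarrow> real" where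
  "trig c0 c1 c2 t = c0 + c1 * cos (2 * pi * t) + c2 * sin (2 * pi * t)"

lemma rhs_eq: "abel_rhs a0 a1 a2 b0 b1 b2 t x = trig a0 a1 a2 t * x ^ 3 + trig b0 b1 b2 t * x ^ 2"
  by (simp add: abel_rhs_def trig_def)

lemma trig_cont[continuous_intros]: "continuous_on S (\<lambda>t. trig c0 c1 c2 t)"
  unfolding trig_def by (intro continuous_intros)

lemma trig_bound: "\<bar>trig c0 c1 c2 t\<bar> \<le> \<bar>c0\<bar> + \<bar>c1\<bar> + \<bar>c2\<bar>"
proof -
  have "\<bar>c1 * cos (2 * pi * t)\<bar> \<le> \<bar>c1\<bar>" by (simp add: abs_mult mult_left_le)
  moreover have "\<bar>c2 * sin (2 * pi * t)\<bar> \<le> \<bar>c2\<bar>" by (simp add: abs_mult mult_left_le)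
  ultimately show ?thesis unfolding trig_def by linarith
qed

lemma rhs_diff: "abel_rhs a0 a1 a2 b0 b1 b2 t u - abel_rhs a0 a1 a2 b0 b1 b2 t v
   = (trig a0 a1 a2 t * (u^2 + u * v + v^2) + trig b0 b1 b2 t * (u + v)) * (u - v)"
  unfolding rhs_eq by (simp add: algebra_simps power2_eq_square power3_eq_cube)

definition KK :: "real \<Rightarrow> real \<Rightarrow> real \<Rightarrow> real \<Rightarrow> real \<Rightarrow> real \<Rightarrow> real" where
  "KK a0 a1 a2 b0 b1 b2 = \<bar>a0\<bar> + \<bar>a1\<bar> + \<bar>a2\<bar> + \<bar>b0\<bar> + \<bar>b1\<bar> + \<bar>b2\<bar>"

lemma KK_bounds: "\<bar>trig a0 a1 a2 t\<bar> \<le> KK a0 a1 a2 b0 b1 b2" "\<bar>trig b0 b1 b2 t\<bar> \<le> KK a0 a1 a2 b0 b1 b2"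
  "KK a0 a1 a2 b0 b1 b2 \<ge> 0"
  using trig_bound[of a0 a1 a2 t] trig_bound[of b0 b1 b2 t] 
    abs_ge_zero[of a0] abs_ge_zero[of a1] abs_ge_zero[of a2] abs_ge_zero[of b0] abs_ge_zero[of b1] abs_ge_zero[of b2]
  unfolding KK_def by linarith+

context fixes a0 a1 a2 b0 b1 b2 :: real
begin

abbreviation "sol \<equiv> abel_solution a0 a1 a2 b0 b1 b2"
abbreviation "AA \<equiv> trig a0 a1 a2"
abbreviation "BB \<equiv> trig b0 b1 b2"
abbreviation "ff \<equiv> abel_rhs a0 a1 a2 b0 b1 b2"

lemma sol_D: "sol x \<Longrightarrow> t \<in> {0..1} \<Longrightarrow> (x has_real_derivative ff t (x t)) (at t within {0..1})"
  by (simp add: abel_solution_def)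

lemma sol_cont: "sol x \<Longrightarrow> continuous_on {0..1} x"
  by (rule DERIV_continuous_on) (rule sol_D)

lemma sol_zero: "sol (\<lambda>t. 0)"
  by (simp add: abel_solution_def abel_rhs_def)

lemma sol_rel:
  assumes x: "sol x" and y: "sol y" and t: "t \<in> {0..1}"
  shows "x t - y t = (x 0 - y 0) * exp (integral {0..t} (\<lambda>s. AA s * (x s ^ 2 + x s * y s + y s ^ 2) + BB s * (x s + y s)))"
proof -
  have "(\<lambda>s. x s - y s) t = (\<lambda>s. x s - y s) 0 * exp (integral {0..t} (\<lambda>s. AA s * (x s ^ 2 + x s * y s + y s ^ 2) + BB s * (x s + y s)))"
  proof (rule lin_ode[OF _ _ t])
    fix s :: real assume s: "s \<in> {0..1}"
    have "((\<lambda>s. x s - y s) has_real_derivative ff s (x s) - ff s (y s)) (at s within {0..1})"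
      by (intro derivative_intros sol_D[OF x s] sol_D[OF y s])
    then show "((\<lambda>s. x s - y s) has_real_derivative (AA s * (x s ^ 2 + x s * y s + y s ^ 2) + BB s * (x s + y s)) * (x s - y s)) (at s within {0..1})"
      by (simp add: rhs_diff)
  next
    show "continuous_on {0..1} (\<lambda>s. AA s * (x s ^ 2 + x s * y s + y s ^ 2) + BB s * (x s + y s))"
      using sol_cont[OF x] sol_cont[OF y] by (intro continuous_intros)
  qed
  then show ?thesis by simp
qed

lemma sol_unique:
  assumes x: "sol x" and y: "sol y" and t0: "t0 \<in> {0..1}" "x t0 = y t0" and t: "t \<in> {0..1}"
  shows "x t = y t"
proof -
  have "x 0 - y 0 = 0" using sol_rel[OF x y t0(1)] t0(2) by simp
  then show ?thesis using sol_rel[OF x y t] by simp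
qed

lemma sol_order:
  assumes x: "sol x" and y: "sol y" and lt: "x 0 < y 0" and t: "t \<in> {0..1}"
  shows "x t < y t"
proof -
  have "x t - y t < 0" using sol_rel[OF x y t] lt by (simp add: mult_neg_pos)
  then show ?thesis by simp
qed

lemma sol_pos: "sol x \<Longrightarrow> x 0 > 0 \<Longrightarrow> t \<in> {0..1} \<Longrightarrow> x t > 0"
  using sol_order[OF sol_zero, of x t] by simp

lemma sol_neg: "sol x \<Longrightarrow> x 0 < 0 \<Longrightarrow> t \<in> {0..1} \<Longrightarrow> x t < 0"
  using sol_order[OF _ sol_zero, of x t] by simp

lemma nonzero_orbit_ne0:
  assumes x: "sol x" and nz: "nonzero_orbit x" and t: "t \<in> {0..1}"
  shows "x t \<noteq> 0"
proof
  assume "x t = 0"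
  then have "x s = 0" if "s \<in> {0..1}" for s using sol_unique[OF x sol_zero t _ that] by simp
  then show False using nz by (auto simp: nonzero_orbit_def)
qed

lemma nonzero_orbit_x0: "sol x \<Longrightarrow> nonzero_orbit x \<Longrightarrow> x 0 \<noteq> 0"
  using nonzero_orbit_ne0[of x 0] by auto

lemma poincare_sol:
  assumes x: "sol x"
  shows "abel_poincare a0 a1 a2 b0 b1 b2 (x 0) = x 1"
  unfolding abel_poincare_def
proof (rule the_equality)
  show "\<exists>x'. sol x' \<and> x' 0 = x 0 \<and> x' 1 = x 1" using x by blast
next
  fix y assume "\<exists>x'. sol x' \<and> x' 0 = x 0 \<and> x' 1 = y"
  then obtain x' where "sol x'" "x' 0 = x 0" "x' 1 = y" by blast
  then show "y = x 1" using sol_unique[OF x \<open>sol x'\<close>, of 0 1] by auto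
qed

end

context fixes a0 a1 a2 b0 b1 b2 :: real
begin

lemma exist_near:
  assumes xs: "sol a0 a1 a2 b0 b1 b2 xs" and R: "\<And>t. t \<in> {0..1} \<Longrightarrow> \<bar>xs t\<bar> \<le> R"
    and L: "L = 3 * KK a0 a1 a2 b0 b1 b2 * (R+1)^2 + 2 * KK a0 a1 a2 b0 b1 b2 * (R+1)"
    and \<xi>: "\<bar>\<xi> - xs 0\<bar> < exp (-L)"
  shows "\<exists>x. sol a0 a1 a2 b0 b1 b2 x \<and> x 0 = \<xi> \<and> (\<forall>t\<in>{0..1}. \<bar>x t - xs t\<bar> \<le> exp L * \<bar>\<xi> - xs 0\<bar>)"
proof -
  let ?K = "KK a0 a1 a2 b0 b1 b2"
  have R0: "R \<ge> 0" using R[of 0] by auto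
  have L0: "L \<ge> 0" using L R0 KK_bounds(3)[of a0 a1 a2 b0 b1 b2] by simp
  define cl where "cl t u = max (xs t - 1) (min (xs t + 1) u)" for t u
  define F where "F t u = ff a0 a1 a2 b0 b1 b2 t (cl t u)" for t u
  have xsc: "continuous_on {0..1} xs" by (rule sol_cont[OF xs])
  have cont: "continuous_on {0..1} (\<lambda>s. F s (\<phi> s))" if "continuous_on {0..1} \<phi>" for \<phi>
    unfolding F_def cl_def rhs_eq
    by (intro continuous_intros continuous_on_max continuous_on_min xsc that)
  have clb: "\<bar>cl s u\<bar> \<le> R + 1" if s: "s \<in> {0..1}" for s u
    using R[OF s] unfolding cl_def by (auto simp: max_def min_def abs_if split: if_splits)
  have lip: "\<bar>F s u - F s v\<bar> \<le> L * \<bar>u - v\<bar>" if s: "s \<in> {0..1}" for s u v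
  proof -
    have "\<bar>F s u - F s v\<bar> = \<bar>AA a0 a1 a2 s * ((cl s u)^2 + cl s u * cl s v + (cl s v)^2) + BB b0 b1 b2 s * (cl s u + cl s v)\<bar> * \<bar>cl s u - cl s v\<bar>"
      unfolding F_def rhs_diff abs_mult ..
    also have "\<dots> \<le> L * \<bar>u - v\<bar>"
    proof (rule mult_mono)
      show "\<bar>AA a0 a1 a2 s * ((cl s u)^2 + cl s u * cl s v + (cl s v)^2) + BB b0 b1 b2 s * (cl s u + cl s v)\<bar> \<le> L"
        unfolding L by (rule poly_bound[OF clb[OF s] clb[OF s] KK_bounds(1) KK_bounds(2)])
      show "\<bar>cl s u - cl s v\<bar> \<le> \<bar>u - v\<bar>" unfolding cl_def by (rule clamp_lip) simp
    qed (use L0 in auto)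
    finally show ?thesis .
  qed
  obtain x where x0: "x 0 = \<xi>" and xd: "\<And>t. t \<in> {0..1} \<Longrightarrow> (x has_real_derivative F t (x t)) (at t within {0..1})"
    using picard[OF cont lip L0, of \<xi>] by blast
  have clxs: "cl t (xs t) = xs t" for t by (simp add: cl_def)
  have xsd: "(xs has_real_derivative F t (xs t)) (at t within {0..1})" if "t \<in> {0..1}" for t
    using sol_D[OF xs that] by (simp add: F_def clxs)
  have zb: "\<bar>(\<lambda>t. x t - xs t) t\<bar> \<le> \<bar>(\<lambda>t. x t - xs t) 0\<bar> * exp (L * t)" if t: "t \<in> {0..1}" for t
  proof (rule gronwall_sq[OF _ _ t])
    fix s :: real assume s: "s \<in> {0..1}"
    show "((\<lambda>t. x t - xs t) has_real_derivative F s (x s) - F s (xs s)) (at s within {0..1})"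
      by (intro derivative_intros xd xsd s)
    show "\<bar>F s (x s) - F s (xs s)\<bar> \<le> L * \<bar>x s - xs s\<bar>" by (rule lip[OF s])
  qed
  have zb2: "\<bar>x t - xs t\<bar> \<le> exp L * \<bar>\<xi> - xs 0\<bar>" if t: "t \<in> {0..1}" for t
  proof -
    have "exp (L * t) \<le> exp L" using t L0 by (auto intro: mult_left_le)
    then have "\<bar>\<xi> - xs 0\<bar> * exp (L * t) \<le> \<bar>\<xi> - xs 0\<bar> * exp L" by (intro mult_left_mono) auto
    then show ?thesis using zb[OF t] x0 by (simp add: mult.commute)
  qed
  have zb3: "\<bar>x t - xs t\<bar> < 1" if t: "t \<in> {0..1}" for t
  proof -
    have "exp L * \<bar>\<xi> - xs 0\<bar> < exp L * exp (-L)" using \<xi> by (intro mult_strict_left_mono) auto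
    then show ?thesis using zb2[OF t] by (simp add: exp_minus)
  qed
  have "sol a0 a1 a2 b0 b1 b2 x"
    unfolding abel_solution_def
  proof
    fix t :: real assume t: "t \<in> {0..1}"
    have "cl t (x t) = x t" using zb3[OF t] by (auto simp: cl_def)
    then show "(x has_real_derivative ff a0 a1 a2 b0 b1 b2 t (x t)) (at t within {0..1})"
      using xd[OF t] by (simp add: F_def)
  qed
  then show ?thesis using x0 zb2 by blast
qed

lemma poincare_deriv:
  assumes xs: "sol a0 a1 a2 b0 b1 b2 xs"
  shows "(abel_poincare a0 a1 a2 b0 b1 b2 has_real_derivative
           exp (integral {0..1} (\<lambda>t. 3 * AA a0 a1 a2 t * xs t ^ 2 + 2 * BB b0 b1 b2 t * xs t))) (at (xs 0))"
proof -
  let ?K = "KK a0 a1 a2 b0 b1 b2"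
  let ?P = "abel_poincare a0 a1 a2 b0 b1 b2"
  have xsc: "continuous_on {0..1} xs" by (rule sol_cont[OF xs])
  obtain R where R0: "R \<ge> 0" and R: "\<And>t. t \<in> {0..1} \<Longrightarrow> \<bar>xs t\<bar> \<le> R" using cont_bounded[OF xsc] by blast
  define L where "L = 3 * ?K * (R+1)^2 + 2 * ?K * (R+1)"
  have K0: "?K \<ge> 0" by (rule KK_bounds(3))
  have L0: "L \<ge> 0" using K0 R0 by (simp add: L_def)
  define \<eta> where "\<eta> = exp (-L)"
  have \<eta>0: "\<eta> > 0" by (simp add: \<eta>_def)
  define X where "X \<xi> = (SOME x. sol a0 a1 a2 b0 b1 b2 x \<and> x 0 = \<xi> \<and> (\<forall>t\<in>{0..1}. \<bar>x t - xs t\<bar> \<le> exp L * \<bar>\<xi> - xs 0\<bar>))" for \<xi>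
  have XP: "sol a0 a1 a2 b0 b1 b2 (X \<xi>) \<and> X \<xi> 0 = \<xi> \<and> (\<forall>t\<in>{0..1}. \<bar>X \<xi> t - xs t\<bar> \<le> exp L * \<bar>\<xi> - xs 0\<bar>)"
    if xi: "\<bar>\<xi> - xs 0\<bar> < \<eta>" for \<xi>
  proof -
    have "\<exists>x. sol a0 a1 a2 b0 b1 b2 x \<and> x 0 = \<xi> \<and> (\<forall>t\<in>{0..1}. \<bar>x t - xs t\<bar> \<le> exp L * \<bar>\<xi> - xs 0\<bar>)"
    proof (rule exist_near[OF xs R L_def])
      have "\<bar>\<xi> - xs 0\<bar> < exp (-L)" using xi \<eta>_def by simp
      then show "\<bar>\<xi> - xs 0\<bar> < exp (-L)" by simp
    qed
    from someI_ex[OF this] show ?thesis unfolding X_def .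
  qed
  define G where "G \<xi> = (\<lambda>t. AA a0 a1 a2 t * (X \<xi> t ^ 2 + X \<xi> t * xs t + xs t ^ 2) + BB b0 b1 b2 t * (X \<xi> t + xs t))" for \<xi>
  define G0 where "G0 t = 3 * AA a0 a1 a2 t * xs t ^ 2 + 2 * BB b0 b1 b2 t * xs t" for t
  define M where "M = integral {0..1} G0"
  define C where "C = exp L * (?K * (3 * R + 1) + ?K)"
  have G0c: "continuous_on {0..1} G0" unfolding G0_def using xsc by (intro continuous_intros)
  have Gc: "continuous_on {0..1} (G \<xi>)" if "\<bar>\<xi> - xs 0\<bar> < \<eta>" for \<xi>
    unfolding G_def using xsc sol_cont[of a0 a1 a2 b0 b1 b2 "X \<xi>"] XP[OF that] by (intro continuous_intros) auto
  have quot: "?P \<xi> - ?P (xs 0) = (\<xi> - xs 0) * exp (integral {0..1} (G \<xi>))" if "\<bar>\<xi> - xs 0\<bar> < \<eta>" for \<xi>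
  proof -
    have s: "sol a0 a1 a2 b0 b1 b2 (X \<xi>)" and x0: "X \<xi> 0 = \<xi>" using XP[OF that] by auto
    have "?P \<xi> = X \<xi> 1" using poincare_sol[OF s] x0 by simp
    moreover have "?P (xs 0) = xs 1" by (rule poincare_sol[OF xs])
    ultimately show ?thesis using sol_rel[OF s xs, of 1] x0 by (simp add: G_def)
  qed
  have ib: "\<bar>integral {0..1} (G \<xi>) - M\<bar> \<le> C * \<bar>\<xi> - xs 0\<bar>" if \<xi>: "\<bar>\<xi> - xs 0\<bar> < \<eta>" for \<xi>
  proof -
    have XB: "\<bar>X \<xi> t - xs t\<bar> \<le> exp L * \<bar>\<xi> - xs 0\<bar>" if "t \<in> {0..1}" for t using XP[OF \<xi>] that by auto
    have XB1: "\<bar>X \<xi> t - xs t\<bar> \<le> 1" if "t \<in> {0..1}" for t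
    proof -
      have "exp L * \<bar>\<xi> - xs 0\<bar> \<le> exp L * \<eta>" using \<xi> by (intro mult_left_mono) auto
      then show ?thesis using XB[OF that] by (simp add: \<eta>_def exp_minus)
    qed
    have e1: "integral {0..1} (G \<xi>) - M = integral {0..1} (\<lambda>t. G \<xi> t - G0 t)"
      unfolding M_def by (rule integral_diff[symmetric]) (use Gc[OF \<xi>] G0c in \<open>auto intro: integrable_continuous_interval\<close>)
    have "\<bar>integral {0..1} (\<lambda>t. G \<xi> t - G0 t)\<bar> \<le> integral {0..1} (\<lambda>t::real. C * \<bar>\<xi> - xs 0\<bar>)"
    proof (rule abs_integral_bound)
      show "(\<lambda>t. G \<xi> t - G0 t) integrable_on {0..1}"
        using Gc[OF \<xi>] G0c by (intro integrable_continuous_interval continuous_intros)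
      fix t :: real assume t: "t \<in> {0..1}"
      have eq: "G \<xi> t - G0 t = (X \<xi> t - xs t) * (AA a0 a1 a2 t * (X \<xi> t + 2 * xs t) + BB b0 b1 b2 t)"
        unfolding G_def G0_def by (simp add: algebra_simps power2_eq_square)
      have Xb: "\<bar>X \<xi> t\<bar> \<le> R + 1" using XB1[OF t] R[OF t] by linarith
      have s2: "\<bar>X \<xi> t + 2 * xs t\<bar> \<le> 3 * R + 1" using Xb R[OF t] by linarith
      have "\<bar>AA a0 a1 a2 t * (X \<xi> t + 2 * xs t) + BB b0 b1 b2 t\<bar> \<le> ?K * (3 * R + 1) + ?K"
      proof -
        have "\<bar>AA a0 a1 a2 t * (X \<xi> t + 2 * xs t)\<bar> \<le> ?K * (3 * R + 1)"
          unfolding abs_mult by (intro mult_mono KK_bounds s2) auto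
        then show ?thesis using KK_bounds(2)[of b0 b1 b2 t a0 a1 a2] by linarith
      qed
      then have "\<bar>G \<xi> t - G0 t\<bar> \<le> (exp L * \<bar>\<xi> - xs 0\<bar>) * (?K * (3 * R + 1) + ?K)"
        unfolding eq abs_mult by (intro mult_mono XB t) auto
      then show "\<bar>G \<xi> t - G0 t\<bar> \<le> C * \<bar>\<xi> - xs 0\<bar>" by (simp add: C_def algebra_simps)
    qed (rule integrable_const_ivl)
    then show ?thesis using e1 by simp
  qed
  have ev: "\<forall>\<^sub>F \<xi> in at (xs 0). \<bar>\<xi> - xs 0\<bar> < \<eta>"
    unfolding eventually_at using \<eta>0 by (auto simp: dist_real_def intro!: exI[of _ \<eta>])
  have lim1: "((\<lambda>\<xi>. integral {0..1} (G \<xi>) - M) \<longlongrightarrow> 0) (at (xs 0))"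
  proof (rule Lim_null_comparison)
    show "\<forall>\<^sub>F \<xi> in at (xs 0). norm (integral {0..1} (G \<xi>) - M) \<le> C * \<bar>\<xi> - xs 0\<bar>"
      using ev by eventually_elim (use ib in auto)
    have "((\<lambda>\<xi>. C * \<bar>\<xi> - xs 0\<bar>) \<longlongrightarrow> C * \<bar>xs 0 - xs 0\<bar>) (at (xs 0))"
      by (intro tendsto_intros)
    then show "((\<lambda>\<xi>. C * \<bar>\<xi> - xs 0\<bar>) \<longlongrightarrow> 0) (at (xs 0))" by simp
  qed
  have lim2: "((\<lambda>\<xi>. exp (integral {0..1} (G \<xi>))) \<longlongrightarrow> exp M) (at (xs 0))"
    using lim1 unfolding LIM_zero_iff by (intro tendsto_intros)
  have "((\<lambda>\<xi>. (?P \<xi> - ?P (xs 0)) / (\<xi> - xs 0)) \<longlongrightarrow> exp M) (at (xs 0))"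
  proof (rule Lim_transform_eventually[OF lim2])
    have "\<forall>\<^sub>F \<xi> in at (xs 0). \<xi> \<noteq> xs 0" by (simp add: eventually_at_filter)
    with ev show "\<forall>\<^sub>F \<xi> in at (xs 0). exp (integral {0..1} (G \<xi>)) = (?P \<xi> - ?P (xs 0)) / (\<xi> - xs 0)"
      by eventually_elim (use quot in auto)
  qed
  then show ?thesis unfolding has_field_derivative_iff M_def G0_def by simp
qed

end

lemma trig_lin: "a * trig a0 a1 a2 t + b * trig b0 b1 b2 t = trig (a*a0+b*b0) (a*a1+b*b1) (a*a2+b*b2) t"
  by (simp add: trig_def algebra_simps)

lemma trig_nonneg:
  assumes "p\<^sup>2 \<ge> q\<^sup>2 + r\<^sup>2" "p \<ge> 0"
  shows "trig p q r t \<ge> 0"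
proof -
  let ?c = "cos (2*pi*t)" and ?s = "sin (2*pi*t)"
  have "(q * ?c + r * ?s)\<^sup>2 \<le> (q\<^sup>2 + r\<^sup>2) * (?c\<^sup>2 + ?s\<^sup>2)"
  proof -
    have gen: "(q * c + r * s)\<^sup>2 + (q * s - r * c)\<^sup>2 = (q\<^sup>2 + r\<^sup>2) * (c\<^sup>2 + s\<^sup>2)" for c s :: real
      by (simp add: power2_eq_square algebra_simps)
    have "(q * ?c + r * ?s)\<^sup>2 + (q * ?s - r * ?c)\<^sup>2 = (q\<^sup>2 + r\<^sup>2) * (?c\<^sup>2 + ?s\<^sup>2)"
      by (rule gen)
    then show ?thesis by (metis le_add_same_cancel1 zero_le_power2)
  qed
  also have "\<dots> = q\<^sup>2 + r\<^sup>2" by simp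
  also have "\<dots> \<le> p\<^sup>2" by (rule assms(1))
  finally have "\<bar>q * ?c + r * ?s\<bar> \<le> \<bar>p\<bar>" by (simp add: abs_le_square_iff)
  then show ?thesis using assms(2) unfolding trig_def by linarith
qed

lemma trig_neg_coef: "trig (-c0) (-c1) (-c2) t = - trig c0 c1 c2 t"
  by (simp add: trig_def)

lemma fixed_sign_comb:
  assumes "(a0\<^sup>2 \<ge> a1\<^sup>2 + a2\<^sup>2 \<or> b0\<^sup>2 \<ge> b1\<^sup>2 + b2\<^sup>2 \<or>
       (a2 * b0 - a0 * b2)\<^sup>2 + (a0 * b1 - a1 * b0)\<^sup>2 \<ge> (a2 * b1 - a1 * b2)\<^sup>2)"
  shows "\<exists>a b. (a \<noteq> 0 \<or> b \<noteq> 0) \<and> (\<forall>t. 0 \<le> a * trig a0 a1 a2 t + b * trig b0 b1 b2 t)"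
proof -
  have key: "\<exists>a b. (a \<noteq> 0 \<or> b \<noteq> 0) \<and> (\<forall>t. 0 \<le> a * trig a0 a1 a2 t + b * trig b0 b1 b2 t)"
    if ab: "a \<noteq> 0 \<or> b \<noteq> 0" and q: "(a*a0+b*b0)\<^sup>2 \<ge> (a*a1+b*b1)\<^sup>2 + (a*a2+b*b2)\<^sup>2" for a b
  proof (cases "a*a0+b*b0 \<ge> 0")
    case True
    then show ?thesis using ab trig_nonneg[OF q True] by (auto simp: trig_lin)
  next
    case False
    have "trig (-(a*a0+b*b0)) (-(a*a1+b*b1)) (-(a*a2+b*b2)) t \<ge> 0" for t
      using trig_nonneg[where p="-(a*a0+b*b0)" and q="-(a*a1+b*b1)" and r="-(a*a2+b*b2)" and t=t] q False unfolding power2_minus by linarith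
    then have "\<forall>t. 0 \<le> (-a) * trig a0 a1 a2 t + (-b) * trig b0 b1 b2 t"
      by (simp add: trig_lin[of "-a" a0 a1 a2 _ "-b"] algebra_simps trig_def)
    then show ?thesis using ab by (intro exI[of _ "-a"] exI[of _ "-b"]) auto
  qed
  show ?thesis
  proof (cases "a0\<^sup>2 \<ge> a1\<^sup>2 + a2\<^sup>2")
    case True then show ?thesis using key[of 1 0] by simp
  next
    case F1: False
    show ?thesis
    proof (cases "b0\<^sup>2 \<ge> b1\<^sup>2 + b2\<^sup>2")
      case True then show ?thesis using key[of 0 1] by simp
    next
      case False
      then have c3: "(a2 * b0 - a0 * b2)\<^sup>2 + (a0 * b1 - a1 * b0)\<^sup>2 \<ge> (a2 * b1 - a1 * b2)\<^sup>2" using assms F1 by auto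
      define Q11 where "Q11 = a0\<^sup>2 - a1\<^sup>2 - a2\<^sup>2"
      define Q12 where "Q12 = a0*b0 - a1*b1 - a2*b2"
      define Q22 where "Q22 = b0\<^sup>2 - b1\<^sup>2 - b2\<^sup>2"
      have Q11: "Q11 < 0" using F1 by (simp add: Q11_def)
      have id: "Q12\<^sup>2 - Q11 * Q22 = (a2 * b0 - a0 * b2)\<^sup>2 + (a0 * b1 - a1 * b0)\<^sup>2 - (a2 * b1 - a1 * b2)\<^sup>2"
        unfolding Q11_def Q12_def Q22_def by (simp add: power2_eq_square algebra_simps)
      define a where "a = - Q12 / Q11"
      have "(a*a0+1*b0)\<^sup>2 - (a*a1+1*b1)\<^sup>2 - (a*a2+1*b2)\<^sup>2 = Q11 * a\<^sup>2 + 2 * Q12 * a + Q22"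
        unfolding Q11_def Q12_def Q22_def by (simp add: power2_eq_square algebra_simps)
      also have "\<dots> = (Q11 * Q22 - Q12\<^sup>2) / Q11"
        unfolding a_def using Q11 by (simp add: field_simps power2_eq_square)
      also have "\<dots> \<ge> 0" using Q11 id c3 by (intro divide_nonpos_neg) auto
      finally show ?thesis using key[of a 1] by simp
    qed
  qed
qed

lemma trig_integral: "(trig c0 c1 c2 has_integral c0) {0..1}"
proof -
  define F where "F t = c0 * t + c1 * sin (2*pi*t) / (2*pi) - c2 * cos (2*pi*t) / (2*pi)" for t
  have "(trig c0 c1 c2 has_integral F 1 - F 0) {0..1}"
  proof (rule ftc_real)
    fix t :: real assume "t \<in> {0..1}"
    show "(F has_real_derivative trig c0 c1 c2 t) (at t within {0..1})"
      unfolding F_def trig_def by (rule derivative_eq_intros refl | simp)+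
  qed simp
  moreover have "F 1 - F 0 = c0"
  proof -
    have "sin (2*pi) = 0" "cos (2*pi) = 1" by simp_all
    then show ?thesis by (simp add: F_def)
  qed
  ultimately show ?thesis by simp
qed

lemma trig_zero_interior:
  assumes "\<forall>t\<in>{0<..<1}. trig c0 c1 c2 t = 0"
  shows "c0 = 0 \<and> c1 = 0 \<and> c2 = 0"
proof -
  have "trig c0 c1 c2 (1/4) = 0" "trig c0 c1 c2 (1/2) = 0" "trig c0 c1 c2 (3/4) = 0" using assms by auto
  moreover have "cos (2*pi*(1/4)) = 0" "sin (2*pi*(1/4)) = 1" by simp_all
  moreover have "cos (2*pi*(1/2)) = -1" "sin (2*pi*(1/2)) = 0" by simp_all
  moreover have "cos (2*pi*(3/4)) = 0" "sin (2*pi*(3/4)) = -1"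
  proof -
    have e: "2*pi*(3/4) = pi/2 + pi" by simp
    show "cos (2*pi*(3/4)) = 0" "sin (2*pi*(3/4)) = -1" by (simp_all only: e cos_add sin_add) simp_all
  qed
  ultimately show ?thesis unfolding trig_def by auto
qed

lemma fixed_sign:
  fixes g :: "real \<Rightarrow> real"
  assumes c: "continuous_on {0..1} g" and nz: "\<And>t. t \<in> {0..1} \<Longrightarrow> g t \<noteq> 0"
  shows "(\<forall>t\<in>{0..1}. g t > 0) \<or> (\<forall>t\<in>{0..1}. g t < 0)"
proof (rule ccontr)
  assume "\<not> ?thesis"
  then obtain s t where st: "s \<in> {0..1}" "t \<in> {0..1}" "g s > 0" "g t < 0" using nz by (meson linorder_neqE_linordered_idom)
  show False
  proof (cases "s \<le> t")
    case True
    have "\<exists>x\<ge>s. x \<le> t \<and> g x = 0"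
      by (rule IVT2') (use st True in \<open>auto intro: continuous_on_subset[OF c]\<close>)
    then show False using nz st by fastforce
  next
    case False
    have "\<exists>x\<ge>t. x \<le> s \<and> g x = 0"
      by (rule IVT') (use st False in \<open>auto intro: continuous_on_subset[OF c]\<close>)
    then show False using nz st by fastforce
  qed
qed

lemma alg_M:
  fixes a b x A B :: real
  assumes "a - b * x \<noteq> 0"
  shows "2 * (A * x ^ 2 + B * x) + (a * A + b * B) * x ^ 2 / (a - b * x) + - b * x ^ 2 * (A * x + B) / (a - b * x)
      = 3 * A * x ^ 2 + 2 * B * x"
proof -
  have "(a * A + b * B) * x ^ 2 / (a - b * x) + - b * x ^ 2 * (A * x + B) / (a - b * x)
      = ((a * A + b * B) * x ^ 2 + - b * x ^ 2 * (A * x + B)) / (a - b * x)"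
    by (rule add_divide_distrib[symmetric])
  also have "(a * A + b * B) * x ^ 2 + - b * x ^ 2 * (A * x + B) = (A * x ^ 2) * (a - b * x)"
    by (simp add: algebra_simps power2_eq_square)
  also have "(A * x ^ 2) * (a - b * x) / (a - b * x) = A * x ^ 2" using assms by simp
  finally show ?thesis by (simp add: algebra_simps)
qed

context fixes a0 a1 a2 b0 b1 b2 :: real
begin

lemma orbit_int:
  assumes x: "sol a0 a1 a2 b0 b1 b2 x" and per: "x 0 = x 1" and h: "continuous_on (x ` {0..1}) h"
  shows "((\<lambda>t. h (x t) * ff a0 a1 a2 b0 b1 b2 t (x t)) has_integral 0) {0..1}"
proof -
  obtain m M where mM: "x ` {0..1} = {m..M}"
    using continuous_image_closed_interval[OF _ sol_cont[OF x]] by auto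
  show ?thesis
  proof (rule int_comp_zero[OF sol_D[OF x] per])
    show "x t \<in> {m..M}" if "t \<in> {0..1}" for t using mM that by blast
    show "continuous_on {m..M} h" using h mM by simp
  qed
qed

lemma orbit_I1:
  assumes x: "sol a0 a1 a2 b0 b1 b2 x" and per: "x 0 = x 1" and nz: "\<And>t. t \<in> {0..1} \<Longrightarrow> x t \<noteq> 0"
  shows "((\<lambda>t. AA a0 a1 a2 t * x t ^ 2 + BB b0 b1 b2 t * x t) has_integral 0) {0..1}"
proof -
  have "((\<lambda>t. (\<lambda>u. 1 / u) (x t) * ff a0 a1 a2 b0 b1 b2 t (x t)) has_integral 0) {0..1}"
    by (rule orbit_int[OF x per]) (intro continuous_intros, use nz in auto)
  moreover have "(\<lambda>u. 1 / u) (x t) * ff a0 a1 a2 b0 b1 b2 t (x t) = AA a0 a1 a2 t * x t ^ 2 + BB b0 b1 b2 t * x t"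
    if "t \<in> {0..1}" for t
    using nz[OF that] by (simp add: rhs_eq field_simps power2_eq_square power3_eq_cube)
  ultimately show ?thesis using has_integral_cong by (smt (verit, ccfv_SIG))
qed

lemma orbit_I2:
  assumes x: "sol a0 a1 a2 b0 b1 b2 x" and per: "x 0 = x 1" and nz: "\<And>t. t \<in> {0..1} \<Longrightarrow> x t \<noteq> 0"
  shows "((\<lambda>t. AA a0 a1 a2 t * x t + BB b0 b1 b2 t) has_integral 0) {0..1}"
proof -
  have "((\<lambda>t. (\<lambda>u. 1 / u^2) (x t) * ff a0 a1 a2 b0 b1 b2 t (x t)) has_integral 0) {0..1}"
    by (rule orbit_int[OF x per]) (intro continuous_intros, use nz in auto)
  moreover have "(\<lambda>u. 1 / u^2) (x t) * ff a0 a1 a2 b0 b1 b2 t (x t) = AA a0 a1 a2 t * x t + BB b0 b1 b2 t"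
    if "t \<in> {0..1}" for t
    using nz[OF that] by (simp add: rhs_eq field_simps power2_eq_square power3_eq_cube)
  ultimately show ?thesis using has_integral_cong by (smt (verit, ccfv_SIG))
qed

lemma orbit_IJ:
  assumes x: "sol a0 a1 a2 b0 b1 b2 x" and per: "x 0 = x 1" and nz: "\<And>t. t \<in> {0..1} \<Longrightarrow> x t \<noteq> 0"
    and nc: "\<And>t. t \<in> {0..1} \<Longrightarrow> b * x t \<noteq> a"
  shows "((\<lambda>t. (AA a0 a1 a2 t * x t + BB b0 b1 b2 t) / (b * x t - a)) has_integral 0) {0..1}"
proof -
  have "((\<lambda>t. (\<lambda>u. 1 / (u^2 * (b * u - a))) (x t) * ff a0 a1 a2 b0 b1 b2 t (x t)) has_integral 0) {0..1}"
    by (rule orbit_int[OF x per]) (intro continuous_intros, use nz nc in auto)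
  moreover have "(\<lambda>u. 1 / (u^2 * (b * u - a))) (x t) * ff a0 a1 a2 b0 b1 b2 t (x t) = (AA a0 a1 a2 t * x t + BB b0 b1 b2 t) / (b * x t - a)"
    if "t \<in> {0..1}" for t
  proof -
    have "b * x t - a \<noteq> 0" using nc[OF that] by simp
    then show ?thesis using nz[OF that] by (simp add: rhs_eq field_simps power2_eq_square power3_eq_cube)
  qed
  ultimately show ?thesis using has_integral_cong by (smt (verit, ccfv_SIG))
qed

lemma orbit_IQ:
  assumes x: "sol a0 a1 a2 b0 b1 b2 x" and per: "x 0 = x 1"
    and nc: "\<And>t. t \<in> {0..1} \<Longrightarrow> b * x t \<noteq> a"
  shows "((\<lambda>t. - b * x t ^ 2 * (AA a0 a1 a2 t * x t + BB b0 b1 b2 t) / (a - b * x t)) has_integral 0) {0..1}"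
proof -
  have "((\<lambda>t. (\<lambda>u. - b / (a - b * u)) (x t) * ff a0 a1 a2 b0 b1 b2 t (x t)) has_integral 0) {0..1}"
    by (rule orbit_int[OF x per]) (intro continuous_intros, use nc in force)
  moreover have "(\<lambda>u. - b / (a - b * u)) (x t) * ff a0 a1 a2 b0 b1 b2 t (x t) = - b * x t ^ 2 * (AA a0 a1 a2 t * x t + BB b0 b1 b2 t) / (a - b * x t)"
    if "t \<in> {0..1}" for t
  proof -
    have "a - b * x t \<noteq> 0" using nc[OF that] by simp
    then show ?thesis by (simp add: rhs_eq field_simps power2_eq_square power3_eq_cube)
  qed
  ultimately show ?thesis using has_integral_cong by (smt (verit, ccfv_SIG))
qed

lemma orbit_M:
  assumes x: "sol a0 a1 a2 b0 b1 b2 x" and per: "x 0 = x 1" and nz: "\<And>t. t \<in> {0..1} \<Longrightarrow> x t \<noteq> 0"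
    and nc: "\<And>t. t \<in> {0..1} \<Longrightarrow> b * x t \<noteq> a"
  shows "integral {0..1} (\<lambda>t. 3 * AA a0 a1 a2 t * x t ^ 2 + 2 * BB b0 b1 b2 t * x t)
       = integral {0..1} (\<lambda>t. (a * AA a0 a1 a2 t + b * BB b0 b1 b2 t) * x t ^ 2 / (a - b * x t))"
proof -
  let ?g = "\<lambda>t. (a * AA a0 a1 a2 t + b * BB b0 b1 b2 t) * x t ^ 2 / (a - b * x t)"
  have xc: "continuous_on {0..1} x" by (rule sol_cont[OF x])
  have gc: "continuous_on {0..1} ?g"
    by (intro continuous_intros xc) (use nc in force)
  have gi: "(?g has_integral integral {0..1} ?g) {0..1}"
    by (intro integrable_integral integrable_continuous_interval gc)
  have "((\<lambda>t. 2 * (AA a0 a1 a2 t * x t ^ 2 + BB b0 b1 b2 t * x t) + ?g t + - b * x t ^ 2 * (AA a0 a1 a2 t * x t + BB b0 b1 b2 t) / (a - b * x t))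
        has_integral (2 * 0 + integral {0..1} ?g + 0)) {0..1}"
    by (intro has_integral_add has_integral_mult_right orbit_I1[OF x per nz] orbit_IQ[OF x per nc] gi)
  moreover have "2 * (AA a0 a1 a2 t * x t ^ 2 + BB b0 b1 b2 t * x t) + ?g t + - b * x t ^ 2 * (AA a0 a1 a2 t * x t + BB b0 b1 b2 t) / (a - b * x t)
      = 3 * AA a0 a1 a2 t * x t ^ 2 + 2 * BB b0 b1 b2 t * x t" if "t \<in> {0..1}" for t
  proof -
    have "a - b * x t \<noteq> 0" using nc[OF that] by simp
    then show ?thesis by (rule alg_M)
  qed
  ultimately have "((\<lambda>t. 3 * AA a0 a1 a2 t * x t ^ 2 + 2 * BB b0 b1 b2 t * x t) has_integral integral {0..1} ?g) {0..1}"
    using has_integral_cong[of "{0..1}"] by (smt (verit, ccfv_SIG))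
  then show ?thesis by (rule integral_unique)
qed

lemma hyp_from_M:
  assumes x: "sol a0 a1 a2 b0 b1 b2 x"
    and M: "integral {0..1} (\<lambda>t. 3 * AA a0 a1 a2 t * x t ^ 2 + 2 * BB b0 b1 b2 t * x t) \<noteq> 0"
  shows "abel_hyperbolic a0 a1 a2 b0 b1 b2 (x 0)"
  unfolding abel_hyperbolic_def using poincare_deriv[OF x] M by auto

lemma touch:
  assumes x: "sol a0 a1 a2 b0 b1 b2 x" and per: "x 0 = x 1" and nz: "\<And>t. t \<in> {0..1} \<Longrightarrow> x t \<noteq> 0"
    and b: "b \<noteq> 0" and D: "\<And>t. t \<in> {0..1} \<Longrightarrow> 0 \<le> a * AA a0 a1 a2 t + b * BB b0 b1 b2 t"
    and t0: "t0 \<in> {0..1}" "b * x t0 = a"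
  shows "\<forall>t\<in>{0<..<1}. a * AA a0 a1 a2 t + b * BB b0 b1 b2 t = 0"
proof -
  define c where "c = a / b"
  have bc: "b * c = a" using b by (simp add: c_def)
  have xc: "continuous_on {0..1} x" by (rule sol_cont[OF x])
  define \<Gamma> where "\<Gamma> t = integral {0..t} (\<lambda>s. x s ^ 2 * AA a0 a1 a2 s)" for t
  have gc: "continuous_on {0..1} (\<lambda>s. x s ^ 2 * AA a0 a1 a2 s)" by (intro continuous_intros xc)
  define W where "W t = b * (x t - c) * exp (- \<Gamma> t)" for t
  define W' where "W' t = exp (- \<Gamma> t) * x t ^ 2 * (a * AA a0 a1 a2 t + b * BB b0 b1 b2 t)" for t
  have Wd: "(W has_real_derivative W' t) (at t within {0..1})" if t: "t \<in> {0..1}" for t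
  proof -
    have G: "(\<Gamma> has_real_derivative x t ^ 2 * AA a0 a1 a2 t) (at t within {0..1})"
      unfolding \<Gamma>_def by (rule integral_has_real_derivative[OF gc t])
    show ?thesis unfolding W_def W'_def
      by (rule derivative_eq_intros sol_D[OF x t] G refl | simp add: rhs_eq bc[symmetric] algebra_simps power2_eq_square power3_eq_cube)+
  qed
  have W'nn: "W' t \<ge> 0" if "t \<in> {0..1}" for t
    unfolding W'_def using D[OF that] by simp
  have mono: "W s \<le> W t" if "0 \<le> s" "s \<le> t" "t \<le> 1" for s t
    by (rule mono_deriv[OF Wd W'nn]) (use that in auto)
  have Wt0: "W t0 = 0" using t0 bc by (simp add: W_def algebra_simps)
  have W0: "W 0 = b * (x 0 - c)" by (simp add: W_def \<Gamma>_def)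
  have W1: "W 1 = b * (x 0 - c) * exp (- \<Gamma> 1)" by (simp add: W_def per)
  have "W 0 \<le> 0" using mono[of 0 t0] t0 Wt0 by auto
  moreover have "W 1 \<ge> 0" using mono[of t0 1] t0 Wt0 by auto
  ultimately have "b * (x 0 - c) \<le> 0" "b * (x 0 - c) * exp (- \<Gamma> 1) \<ge> 0" using W0 W1 by auto
  then have "b * (x 0 - c) = 0"
    by (metis exp_gt_zero linorder_not_le mult_neg_pos order_antisym_conv)
  then have W01: "W 0 = 0" "W 1 = 0" using W0 W1 by auto
  have Wz: "W t = 0" if "t \<in> {0..1}" for t
    using mono[of 0 t] mono[of t 1] that W01 by auto
  show ?thesis
  proof
    fix t :: real assume t: "t \<in> {0<..<1}"
    then have t1: "t \<in> {0..1}" by auto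
    have "(W has_real_derivative W' t) (at t)"
      using Wd[OF t1] at_within_Icc_at[of 0 t 1] t by auto
    moreover have "(W has_real_derivative 0) (at t)"
    proof (rule has_field_derivative_transform_within_open[of "\<lambda>_. 0" 0 t "{0<..<1}"])
      show "((\<lambda>_. 0) has_real_derivative 0) (at t)" by simp
    qed (use t Wz in auto)
    ultimately have "W' t = 0" by (rule DERIV_unique)
    then show "a * AA a0 a1 a2 t + b * BB b0 b1 b2 t = 0" using nz[OF t1] by (simp add: W'_def)
  qed
qed

end

lemma alg_J:
  fixes a b x y A B :: real
  assumes "b * x - a \<noteq> 0" "b * y - a \<noteq> 0"
  shows "(A * x + B) / (b * x - a) - (A * y + B) / (b * y - a) = - ((a * A + b * B) * ((x - y) / ((b * x - a) * (b * y - a))))"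
proof -
  have "(A * x + B) / (b * x - a) - (A * y + B) / (b * y - a) = ((A * x + B) * (b * y - a) - (A * y + B) * (b * x - a)) / ((b * x - a) * (b * y - a))"
    by (rule diff_frac_eq[OF assms])
  also have "(A * x + B) * (b * y - a) - (A * y + B) * (b * x - a) = - ((a * A + b * B) * (x - y))"
    by (simp add: algebra_simps)
  finally show ?thesis by simp
qed

context fixes a0 a1 a2 b0 b1 b2 :: real
begin

abbreviation "PO x \<equiv> abel_periodic_orbit a0 a1 a2 b0 b1 b2 x \<and> nonzero_orbit x"

lemma PO_D:
  assumes "PO x"
  shows "sol a0 a1 a2 b0 b1 b2 x" "x 0 = x 1" "\<And>t. t \<in> {0..1} \<Longrightarrow> x t \<noteq> 0"
  using assms nonzero_orbit_ne0[of a0 a1 a2 b0 b1 b2 x] by (auto simp: abel_periodic_orbit_def)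

lemma partb:
  assumes nc: "\<not> (a0 = 0 \<and> b0 = 0 \<and> a2 * b1 - a1 * b2 = 0)"
    and cond: "a0\<^sup>2 \<ge> a1\<^sup>2 + a2\<^sup>2 \<or> b0\<^sup>2 \<ge> b1\<^sup>2 + b2\<^sup>2 \<or>
       (a2 * b0 - a0 * b2)\<^sup>2 + (a0 * b1 - a1 * b0)\<^sup>2 \<ge> (a2 * b1 - a1 * b2)\<^sup>2"
  shows "(\<forall>x y. PO x \<and> PO y \<longrightarrow> (\<forall>t\<in>{0..1}. x t = y t)) \<and>
         (\<forall>x. PO x \<longrightarrow> abel_hyperbolic a0 a1 a2 b0 b1 b2 (x 0))"
proof -
  obtain a b where ab: "a \<noteq> 0 \<or> b \<noteq> 0" and Dnn: "\<And>t. 0 \<le> a * AA a0 a1 a2 t + b * BB b0 b1 b2 t"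
    using fixed_sign_comb[OF cond] by blast
  define D where "D t = a * AA a0 a1 a2 t + b * BB b0 b1 b2 t" for t
  have Dc: "continuous_on S D" for S unfolding D_def by (intro continuous_intros)
  show ?thesis
  proof (cases "\<forall>t\<in>{0<..<1}. D t = 0")
    case True
    then have "\<forall>t\<in>{0<..<1}. trig (a*a0+b*b0) (a*a1+b*b1) (a*a2+b*b2) t = 0"
      by (simp add: D_def trig_lin)
    then have co: "a*a0+b*b0 = 0" "a*a1+b*b1 = 0" "a*a2+b*b2 = 0"
      using trig_zero_interior by blast+
    show ?thesis
    proof (cases "b = 0")
      case True
      then have a: "a \<noteq> 0" using ab by simp
      then have A0: "a0 = 0" "a1 = 0" "a2 = 0" using co True by auto
      then have "b0 \<noteq> 0" using nc by simp
      have noPO: False if "PO x" for x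
      proof -
        have I: "((\<lambda>t. AA a0 a1 a2 t * x t + BB b0 b1 b2 t) has_integral 0) {0..1}"
          by (rule orbit_I2[OF PO_D[OF that]])
        have "(\<lambda>t. AA a0 a1 a2 t * x t + BB b0 b1 b2 t) = BB b0 b1 b2" using A0 by (simp add: trig_def fun_eq_iff)
        then have "(BB b0 b1 b2 has_integral 0) {0..1}" using I by simp
        then have "b0 = 0" using trig_integral[of b0 b1 b2] has_integral_unique by blast
        then show False using \<open>b0 \<noteq> 0\<close> by simp
      qed
      show ?thesis using noPO by blast
    next
      case False
      define c where "c = a / b"
      have bc: "b * c = a" using False by (simp add: c_def)
      have bi: "b0 = - c * a0" "b1 = - c * a1" "b2 = - c * a2"
        using co False unfolding c_def by (simp_all add: field_simps)
      have BBc: "BB b0 b1 b2 t = - c * AA a0 a1 a2 t" for t by (simp add: bi trig_def algebra_simps)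
      have a0: "a0 \<noteq> 0"
      proof
        assume "a0 = 0"
        moreover have "a2 * b1 - a1 * b2 = 0" by (simp add: bi algebra_simps)
        ultimately show False using nc bi by simp
      qed
      have solc: "sol a0 a1 a2 b0 b1 b2 (\<lambda>t. c)"
        unfolding abel_solution_def by (auto simp: rhs_eq BBc power2_eq_square power3_eq_cube)
      have K: "x t = c" if P: "PO x" and t: "t \<in> {0..1}" for x t
      proof -
        note X = PO_D[OF P]
        have "\<exists>t0\<in>{0..1}. b * x t0 = a"
        proof (rule ccontr)
          assume "\<not> ?thesis"
          then have nc': "\<And>t. t \<in> {0..1} \<Longrightarrow> b * x t \<noteq> a" by auto
          have I: "((\<lambda>t. (AA a0 a1 a2 t * x t + BB b0 b1 b2 t) / (b * x t - a)) has_integral 0) {0..1}"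
            by (rule orbit_IJ[OF X nc'])
          have eq: "(AA a0 a1 a2 t * x t + BB b0 b1 b2 t) / (b * x t - a) = AA a0 a1 a2 t / b" if "t \<in> {0..1}" for t
          proof -
            have "x t - c \<noteq> 0" using nc'[OF that] bc by auto
            then show ?thesis using False by (simp add: BBc bc[symmetric] field_simps)
          qed
          have "((\<lambda>t. AA a0 a1 a2 t / b) has_integral 0) {0..1}"
            by (rule has_integral_cong[THEN iffD1, OF _ I]) (use eq in auto)
          moreover have "((\<lambda>t. AA a0 a1 a2 t / b) has_integral a0 / b) {0..1}"
            using has_integral_mult_left[OF trig_integral[of a0 a1 a2], of "1/b"] by (simp add: field_simps)
          ultimately have "a0 / b = 0" using has_integral_unique by blast
          then show False using a0 False by simp
        qed
        then obtain t0 where t0: "t0 \<in> {0..1}" "b * x t0 = a" by blast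
        have "x t0 = c" using t0 bc False by (metis mult_left_cancel)
        then show ?thesis using sol_unique[OF X(1) solc t0(1) _ t] by simp
      qed
      show ?thesis
      proof (intro conjI allI impI ballI)
        fix x y and t :: real assume "PO x \<and> PO y" "t \<in> {0..1}"
        then show "x t = y t" using K by auto
      next
        fix x assume P: "PO x"
        note X = PO_D[OF P]
        have c0: "c \<noteq> 0" using K[OF P, of 0] X(3)[of 0] by auto
        have "integral {0..1} (\<lambda>t. 3 * AA a0 a1 a2 t * x t ^ 2 + 2 * BB b0 b1 b2 t * x t) = integral {0..1} (\<lambda>t. c\<^sup>2 * AA a0 a1 a2 t)"
          by (rule integral_cong) (simp add: K[OF P] BBc power2_eq_square algebra_simps)
        also have "\<dots> = c\<^sup>2 * a0"
          using has_integral_mult_right[OF trig_integral[of a0 a1 a2], of "c\<^sup>2"] by (rule integral_unique)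
        finally show "abel_hyperbolic a0 a1 a2 b0 b1 b2 (x 0)"
          using hyp_from_M[OF X(1)] c0 a0 by simp
      qed
    qed
  next
    case False
    then obtain t1 where t1: "t1 \<in> {0<..<1}" "D t1 \<noteq> 0" by blast
    then have Dt1: "D t1 > 0" using Dnn[of t1] by (simp add: D_def)
    have t1': "t1 \<in> {0..1}" using t1 by auto
    have avoid: "b * x t \<noteq> a" if P: "PO x" and t: "t \<in> {0..1}" for x t
    proof (cases "b = 0")
      case True then show ?thesis using ab by simp
    next
      case bnz: False
      show ?thesis
      proof
        assume "b * x t = a"
        from touch[OF PO_D[OF P] bnz Dnn t this] have "\<forall>t\<in>{0<..<1}. D t = 0" by (simp add: D_def)
        then show False using t1 by auto
      qed
    qed
    have sgn_int: "integral {0..1} (\<lambda>t. D t * k t) \<noteq> 0"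
      if kc: "continuous_on {0..1} k" and knz: "\<And>t. t \<in> {0..1} \<Longrightarrow> k t \<noteq> 0" for k
    proof -
      have dkc: "continuous_on {0..1} (\<lambda>t. D t * k t)" by (intro continuous_intros Dc kc)
      from fixed_sign[OF kc knz] show ?thesis
      proof
        assume kp: "\<forall>t\<in>{0..1}. k t > 0"
        have nn: "0 \<le> D t * k t" if "t \<in> {0..1}" for t
          using Dnn[of t] kp that unfolding D_def by (meson less_imp_le mult_nonneg_nonneg)
        have "integral {0..1} (\<lambda>t. D t * k t) > 0"
          by (rule int_pos[OF dkc nn t1']) (use kp Dt1 t1' in auto)
        then show ?thesis by simp
      next
        assume kn: "\<forall>t\<in>{0..1}. k t < 0"
        have nn: "0 \<le> - (D t * k t)" if "t \<in> {0..1}" for t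
          using Dnn[of t] kn that unfolding D_def by (simp add: mult_nonneg_nonpos less_imp_le)
        have "integral {0..1} (\<lambda>t. - (D t * k t)) > 0"
          by (rule int_pos[OF _ nn t1']) (use kn Dt1 t1' dkc in \<open>auto intro: continuous_intros simp: mult_pos_neg\<close>)
        then show ?thesis by (simp add: integral_neg)
      qed
    qed
    show ?thesis
    proof (intro conjI allI impI ballI)
      fix x assume P: "PO x"
      note X = PO_D[OF P]
      have nc': "\<And>t. t \<in> {0..1} \<Longrightarrow> b * x t \<noteq> a" using avoid[OF P] by blast
      have xc: "continuous_on {0..1} x" by (rule sol_cont[OF X(1)])
      have kc: "continuous_on {0..1} (\<lambda>t. x t ^ 2 / (a - b * x t))"
        by (intro continuous_intros xc) (use nc' in force)
      have I: "integral {0..1} (\<lambda>t. D t * (x t ^ 2 / (a - b * x t))) \<noteq> 0"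
        by (rule sgn_int[OF kc]) (use X(3) nc' in force)
      have E1: "integral {0..1} (\<lambda>t. 3 * AA a0 a1 a2 t * x t ^ 2 + 2 * BB b0 b1 b2 t * x t) = integral {0..1} (\<lambda>t. (a * AA a0 a1 a2 t + b * BB b0 b1 b2 t) * x t ^ 2 / (a - b * x t))"
        by (rule orbit_M[OF X nc'])
      have E2: "(\<lambda>t. (a * AA a0 a1 a2 t + b * BB b0 b1 b2 t) * x t ^ 2 / (a - b * x t)) = (\<lambda>t. D t * (x t ^ 2 / (a - b * x t)))"
        by (simp add: D_def fun_eq_iff)
      have "integral {0..1} (\<lambda>t. 3 * AA a0 a1 a2 t * x t ^ 2 + 2 * BB b0 b1 b2 t * x t) \<noteq> 0"
        using I unfolding E1 E2 .
      then show "abel_hyperbolic a0 a1 a2 b0 b1 b2 (x 0)" by (rule hyp_from_M[OF X(1)])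
    next
      fix x y and t :: real assume PP: "PO x \<and> PO y" and t: "t \<in> {0..1}"
      then have P: "PO x" and Q: "PO y" by auto
      note X = PO_D[OF P] and Y = PO_D[OF Q]
      show "x t = y t"
      proof (rule ccontr)
        assume ne: "x t \<noteq> y t"
        have ne': "x s \<noteq> y s" if "s \<in> {0..1}" for s
          using sol_unique[OF X(1) Y(1) that _ t] ne by auto
        have ncx: "\<And>t. t \<in> {0..1} \<Longrightarrow> b * x t \<noteq> a" using avoid[OF P] by blast
        have ncy: "\<And>t. t \<in> {0..1} \<Longrightarrow> b * y t \<noteq> a" using avoid[OF Q] by blast
        have xc: "continuous_on {0..1} x" by (rule sol_cont[OF X(1)])
        have yc: "continuous_on {0..1} y" by (rule sol_cont[OF Y(1)])
        define k where "k s = (x s - y s) / ((b * x s - a) * (b * y s - a))" for s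
        have kc: "continuous_on {0..1} k"
          unfolding k_def by (intro continuous_intros xc yc) (use ncx ncy in force)
        have knz: "k s \<noteq> 0" if "s \<in> {0..1}" for s
          using ne'[OF that] ncx[OF that] ncy[OF that] by (simp add: k_def)
        have H: "((\<lambda>s. (AA a0 a1 a2 s * x s + BB b0 b1 b2 s) / (b * x s - a) - (AA a0 a1 a2 s * y s + BB b0 b1 b2 s) / (b * y s - a)) has_integral 0 - 0) {0..1}"
          by (intro has_integral_diff orbit_IJ[OF X ncx] orbit_IJ[OF Y ncy])
        have EQ: "(AA a0 a1 a2 s * x s + BB b0 b1 b2 s) / (b * x s - a) - (AA a0 a1 a2 s * y s + BB b0 b1 b2 s) / (b * y s - a) = - (D s * k s)"
          if "s \<in> {0..1}" for s
          unfolding D_def k_def by (rule alg_J) (use ncx[OF that] ncy[OF that] in auto)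
        have H2: "((\<lambda>s. - (D s * k s)) has_integral 0) {0..1}"
          by (rule has_integral_cong[THEN iffD1, OF _ H[unfolded diff_self]]) (rule EQ)
        have "((\<lambda>s. D s * k s) has_integral 0) {0..1}"
          using has_integral_neg[OF H2] by simp
        then have "integral {0..1} (\<lambda>s. D s * k s) = 0" by (rule integral_unique)
        then show False using sgn_int[OF kc knz] by simp
      qed
    qed
  qed
qed

end

definition betaf :: "real \<Rightarrow> real \<Rightarrow> real \<Rightarrow> real" where
  "betaf p q t = (1 / (2*pi)) * (p * sin (2*pi*t) + q - q * cos (2*pi*t))"

lemma betaf_deriv: "(betaf p q has_real_derivative trig 0 p q t) (at t within S)"
proof -
  have "(betaf p q has_real_derivative (1 / (2*pi)) * (p * (cos (2*pi*t) * (2*pi)) - q * (- sin (2*pi*t) * (2*pi)))) (at t within S)"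
    unfolding betaf_def by (rule derivative_eq_intros refl | simp)+
  moreover have "(1 / (2*pi)) * (p * (cos (2*pi*t) * (2*pi)) - q * (- sin (2*pi*t) * (2*pi))) = trig 0 p q t"
    by (simp add: trig_def field_simps)
  ultimately show ?thesis by simp
qed

lemma betaf_01: "betaf p q 0 = 0" "betaf p q 1 = 0"
  by (simp_all add: betaf_def)

lemma betaf_cont[continuous_intros]: "continuous_on S (betaf p q)"
  unfolding betaf_def by (intro continuous_intros)

lemma betaA_integral:
  "((\<lambda>t. betaf b1 b2 t * trig 0 a1 a2 t) has_integral (a2 * b1 - a1 * b2) / (4 * pi)) {0..1}"
proof -
  define s where "s t = sin (2*pi*t)" for t
  define c where "c t = cos (2*pi*t)" for t
  have sd: "(s has_real_derivative 2*pi * c t) (at t within S)" for t S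
    unfolding s_def c_def by (rule derivative_eq_intros refl | simp)+
  have cd: "(c has_real_derivative - (2*pi * s t)) (at t within S)" for t S
    unfolding s_def c_def by (rule derivative_eq_intros refl | simp)+
  have cc: "c t * c t = 1 - s t * s t" for t
    using sin_cos_squared_add[of "2*pi*t"] by (simp add: s_def c_def power2_eq_square algebra_simps)
  have sc2: "pi * (c t * (c t * 2)) + pi * (s t * (s t * 2)) = pi * 2" for t
  proof -
    have "pi * (c t * (c t * 2)) + pi * (s t * (s t * 2)) = 2 * pi * (c t * c t + s t * s t)" by (simp add: algebra_simps)
    also have "\<dots> = 2 * pi" using cc[of t] by simp
    finally show ?thesis by simp
  qed
  define P1 where "P1 t = (1/(4*pi)) * (s t * s t)" for t
  define P2 where "P2 t = t/2 - (1/(4*pi)) * (s t * c t)" for t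
  define P3 where "P3 t = t/2 + (1/(4*pi)) * (s t * c t)" for t
  define P4 where "P4 t = (1/(2*pi)) * s t" for t
  define P5 where "P5 t = - (1/(2*pi)) * c t" for t
  have d1: "(P1 has_real_derivative s t * c t) (at t within S)" for t S
    unfolding P1_def by (rule derivative_eq_intros sd cd refl | simp add: field_simps)+
  have d2: "(P2 has_real_derivative s t * s t) (at t within S)" for t S
    unfolding P2_def by (rule derivative_eq_intros sd cd refl | simp add: field_simps cc sc2)+
  have d3: "(P3 has_real_derivative c t * c t) (at t within S)" for t S
  proof -
    have cc2: "c t * (c t * 2) = 2 - s t * (s t * 2)" using cc[of t] by (simp add: algebra_simps)
    show ?thesis unfolding P3_def by (rule derivative_eq_intros sd cd refl | simp add: field_simps cc cc2 sc2)+
  qed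
  have d4: "(P4 has_real_derivative c t) (at t within S)" for t S
    unfolding P4_def by (rule derivative_eq_intros sd cd refl | simp add: field_simps)+
  have d5: "(P5 has_real_derivative s t) (at t within S)" for t S
    unfolding P5_def by (rule derivative_eq_intros sd cd refl | simp add: field_simps)+
  define P where "P t = (1/(2*pi)) * (b1 * a1 * P1 t + b1 * a2 * P2 t + b2 * a1 * P4 t + b2 * a2 * P5 t - b2 * a1 * P3 t - b2 * a2 * P1 t)" for t
  have "((\<lambda>t. betaf b1 b2 t * trig 0 a1 a2 t) has_integral P 1 - P 0) {0..1}"
  proof (rule ftc_real)
    fix t :: real assume "t \<in> {0..1}"
    have "(P has_real_derivative (1/(2*pi)) * (b1 * a1 * (s t * c t) + b1 * a2 * (s t * s t) + b2 * a1 * c t + b2 * a2 * s t - b2 * a1 * (c t * c t) - b2 * a2 * (s t * c t))) (at t within {0..1})"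
      unfolding P_def by (rule derivative_eq_intros d1 d2 d3 d4 d5 refl | simp)+
    moreover have "(1/(2*pi)) * (b1 * a1 * (s t * c t) + b1 * a2 * (s t * s t) + b2 * a1 * c t + b2 * a2 * s t - b2 * a1 * (c t * c t) - b2 * a2 * (s t * c t)) = betaf b1 b2 t * trig 0 a1 a2 t"
      unfolding betaf_def trig_def s_def[symmetric] c_def[symmetric] by (simp add: field_simps)
    ultimately show "(P has_real_derivative betaf b1 b2 t * trig 0 a1 a2 t) (at t within {0..1})" by simp
  qed simp
  moreover have "P 1 - P 0 = (a2 * b1 - a1 * b2) / (4 * pi)"
  proof -
    have "s 1 = 0" "c 1 = 1" "s 0 = 0" "c 0 = 1" by (simp_all add: s_def c_def)
    then show ?thesis by (simp add: P_def P1_def P2_def P3_def P4_def P5_def field_simps)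
  qed
  ultimately show ?thesis by simp
qed

lemma small_zero:
  fixes c D \<eta> :: real
  assumes "\<eta> > 0" "D \<ge> 0" "\<And>\<xi>. 0 < \<xi> \<Longrightarrow> \<xi> < \<eta> \<Longrightarrow> \<bar>c\<bar> \<le> D * \<xi>"
  shows "c = 0"
proof (rule ccontr)
  assume c: "c \<noteq> 0"
  define \<xi> where "\<xi> = min (\<eta>/2) (\<bar>c\<bar> / (2 * (D + 1)))"
  have \<xi>0: "\<xi> > 0" using c assms by (simp add: \<xi>_def)
  have "\<xi> < \<eta>" using assms by (simp add: \<xi>_def)
  then have "\<bar>c\<bar> \<le> D * \<xi>" using assms(3) \<xi>0 by blast
  also have "D * \<xi> \<le> D * (\<bar>c\<bar> / (2 * (D + 1)))" using assms by (intro mult_left_mono) (auto simp: \<xi>_def)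
  also have "\<dots> < \<bar>c\<bar>"
  proof -
    have cpos: "\<bar>c\<bar> > 0" using c by simp
    have q: "D / (2*(D+1)) < 1" using assms(2) by (simp add: field_simps)
    have "\<bar>c\<bar> * (D / (2*(D+1))) < \<bar>c\<bar> * 1" by (rule mult_strict_left_mono[OF q cpos])
    then have "\<bar>c\<bar> * (D / (2*(D+1))) < \<bar>c\<bar>" by simp
    moreover have "D * (\<bar>c\<bar> / (2 * (D + 1))) = \<bar>c\<bar> * (D / (2*(D+1)))" by simp
    ultimately show ?thesis by linarith
  qed
  finally show False by simp
qed

lemma inv2:
  fixes x Cf g :: "real \<Rightarrow> real"
  assumes d: "\<And>t. t \<in> {0..1} \<Longrightarrow> (x has_real_derivative Cf t * g (x t)) (at t within {0..1})"
    and Cc: "continuous_on {0..1} Cf" and Ci: "(Cf has_integral 0) {0..1}"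
    and rng: "\<And>t. t \<in> {0..1} \<Longrightarrow> x t \<in> {m..M}"
    and gc: "continuous_on {m..M} g" and gpos: "\<And>u. u \<in> {m..M} \<Longrightarrow> g u > 0"
  shows "x 1 = x 0"
proof -
  define h where "h u = 1 / g u" for u
  have hc: "continuous_on {m..M} h" unfolding h_def
    by (intro continuous_intros gc) (use gpos in force)
  define H where "H u = integral {m..u} h" for u
  have HD: "(H has_real_derivative h u) (at u within {m..M})" if "u \<in> {m..M}" for u
    unfolding H_def by (rule integral_has_real_derivative[OF hc that])
  define \<Phi> where "\<Phi> t = H (x t) - integral {0..t} Cf" for t
  have "(\<Phi> has_real_derivative 0) (at t within {0..1})" if t: "t \<in> {0..1}" for t
  proof -
    have "((H \<circ> x) has_real_derivative h (x t) * (Cf t * g (x t))) (at t within {0..1})"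
    proof (rule DERIV_image_chain)
      show "(H has_real_derivative h (x t)) (at (x t) within x ` {0..1})"
        by (rule DERIV_subset[OF HD[OF rng[OF t]]]) (use rng in auto)
    qed (rule d[OF t])
    moreover have "((\<lambda>t. integral {0..t} Cf) has_real_derivative Cf t) (at t within {0..1})"
      by (rule integral_has_real_derivative[OF Cc t])
    ultimately have "(\<Phi> has_real_derivative h (x t) * (Cf t * g (x t)) - Cf t) (at t within {0..1})"
      unfolding \<Phi>_def by (intro derivative_intros) (auto simp: o_def)
    moreover have "h (x t) * (Cf t * g (x t)) - Cf t = 0"
      using gpos[OF rng[OF t]] by (simp add: h_def)
    ultimately show ?thesis by simp
  qed
  then obtain k where "\<forall>t\<in>{0..1}. \<Phi> t = k"
    using has_field_derivative_zero_constant[of "{0..1::real}" \<Phi>] by auto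
  then have "\<Phi> 1 = \<Phi> 0" by auto
  moreover have "integral {0..1} Cf = 0" using Ci by (rule integral_unique)
  ultimately have Heq: "H (x 1) = H (x 0)" by (simp add: \<Phi>_def)
  have mono: "H u < H v" if "u \<in> {m..M}" "v \<in> {m..M}" "u < v" for u v
  proof (rule DERIV_pos_imp_increasing_open[OF \<open>u < v\<close>])
    fix y assume y: "u < y" "y < v"
    then have "m < y" "y < M" using that by auto
    then have "(H has_real_derivative h y) (at y)"
      using HD[of y] at_within_Icc_at[of m y M] by auto
    moreover have "h y > 0" using gpos[of y] \<open>m < y\<close> \<open>y < M\<close> by (simp add: h_def)
    ultimately show "\<exists>z. (H has_real_derivative z) (at y) \<and> 0 < z" by blast
  next
    show "continuous_on {u..v} H"
      by (rule continuous_on_subset[OF DERIV_continuous_on[OF HD]]) (use that in auto)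
  qed
  show ?thesis
  proof (rule ccontr)
    assume "x 1 \<noteq> x 0"
    then consider "x 1 < x 0" | "x 0 < x 1" by linarith
    then show False
    proof cases
      case 1 then show False using mono[OF rng rng] Heq by (metis atLeastAtMost_iff order_refl zero_le_one less_irrefl)
    next
      case 2 then show False using mono[OF rng rng] Heq by (metis atLeastAtMost_iff order_refl zero_le_one less_irrefl)
    qed
  qed
qed

context fixes a0 a1 a2 b0 b1 b2 :: real
begin

lemma small_sol:
  obtains \<eta> C where "\<eta> > 0" "C \<ge> 1"
    "\<And>\<xi>. \<bar>\<xi>\<bar> < \<eta> \<Longrightarrow> \<exists>x. sol a0 a1 a2 b0 b1 b2 x \<and> x 0 = \<xi> \<and> (\<forall>t\<in>{0..1}. \<bar>x t\<bar> \<le> C * \<bar>\<xi>\<bar>)"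
proof -
  define L where "L = 3 * KK a0 a1 a2 b0 b1 b2 * (0+1)^2 + 2 * KK a0 a1 a2 b0 b1 b2 * (0+1)"
  have L0: "L \<ge> 0" using KK_bounds(3)[of a0 a1 a2 b0 b1 b2] by (simp add: L_def)
  show ?thesis
  proof (rule that[of "exp (-L)" "exp L"])
    show "exp (-L) > 0" by simp
    show "exp L \<ge> 1" using L0 by simp
    fix \<xi> :: real assume "\<bar>\<xi>\<bar> < exp (-L)"
    then show "\<exists>x. sol a0 a1 a2 b0 b1 b2 x \<and> x 0 = \<xi> \<and> (\<forall>t\<in>{0..1}. \<bar>x t\<bar> \<le> exp L * \<bar>\<xi>\<bar>)"
      using exist_near[of a0 a1 a2 b0 b1 b2 "\<lambda>t. 0" 0 L \<xi>] sol_zero[of a0 a1 a2 b0 b1 b2] L_def by simp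
  qed
qed

lemma center_if:
  assumes A0: "a0 = 0" and B0: "b0 = 0" and cr: "a2 * b1 - a1 * b2 = 0"
  shows "abel_center a0 a1 a2 b0 b1 b2"
proof -
  obtain \<eta> C where \<eta>: "\<eta> > 0" and C: "C \<ge> 1"
    and ss: "\<And>\<xi>. \<bar>\<xi>\<bar> < \<eta> \<Longrightarrow> \<exists>x. sol a0 a1 a2 b0 b1 b2 x \<and> x 0 = \<xi> \<and> (\<forall>t\<in>{0..1}. \<bar>x t\<bar> \<le> C * \<bar>\<xi>\<bar>)"
    using small_sol by blast
  define lam where "lam = (if b1 \<noteq> 0 then a1 / b1 else if b2 \<noteq> 0 then a2 / b2 else 0)"
  define e where "e = min \<eta> (1 / (C * (\<bar>lam\<bar> + 2)))"
  have e0: "e > 0" using \<eta> C by (simp add: e_def)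
  show ?thesis unfolding abel_center_def
  proof (intro exI[of _ e] conjI allI impI e0)
    fix \<xi> :: real assume \<xi>: "\<bar>\<xi>\<bar> < e"
    obtain x where x: "sol a0 a1 a2 b0 b1 b2 x" and x0: "x 0 = \<xi>" and xb: "\<And>t. t \<in> {0..1} \<Longrightarrow> \<bar>x t\<bar> \<le> C * \<bar>\<xi>\<bar>"
      using ss[of \<xi>] \<xi> by (auto simp: e_def)
    have per: "x 1 = x 0"
    proof (cases "\<xi> = 0")
      case True then show ?thesis using xb[of 1] x0 by simp
    next
      case False
      have xc: "continuous_on {0..1} x" by (rule sol_cont[OF x])
      obtain m M where mM: "x ` {0..1} = {m..M}"
        using continuous_image_closed_interval[OF _ xc] by auto
      have rng: "x t \<in> {m..M}" if "t \<in> {0..1}" for t using mM that by blast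
      have rng2: "\<exists>t\<in>{0..1}. u = x t" if "u \<in> {m..M}" for u using mM that by blast
      have small: "\<bar>u\<bar> < 1 / (\<bar>lam\<bar> + 2)" if u: "u \<in> {m..M}" for u
      proof -
        obtain t where t: "t \<in> {0..1}" "u = x t" using rng2[OF u] by blast
        have "\<bar>u\<bar> \<le> C * \<bar>\<xi>\<bar>" using xb[OF t(1)] t by simp
        also have "\<dots> < C * (1 / (C * (\<bar>lam\<bar> + 2)))" using \<xi> C by (intro mult_strict_left_mono) (auto simp: e_def)
        also have "\<dots> = 1 / (\<bar>lam\<bar> + 2)" using C by simp
        finally show ?thesis .
      qed
      have sgn: "(\<forall>u\<in>{m..M}. u > 0) \<or> (\<forall>u\<in>{m..M}. u < 0)"
      proof (cases "\<xi> > 0")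
        case True
        then show ?thesis using sol_pos[OF x] x0 rng2 by force
      next
        case False
        then have "\<xi> < 0" using \<open>\<xi> \<noteq> 0\<close> by simp
        then show ?thesis using sol_neg[OF x] x0 rng2 by force
      qed
      show ?thesis
      proof (cases "b1 = 0 \<and> b2 = 0")
        case True
        have eqd: "ff a0 a1 a2 b0 b1 b2 t u = AA a0 a1 a2 t * u ^ 3" for t u
          using True B0 by (simp add: rhs_eq trig_def)
        have Ai: "(AA a0 a1 a2 has_integral 0) {0..1}" using trig_integral[of a0 a1 a2] A0 by simp
        from sgn show ?thesis
        proof
          assume pos: "\<forall>u\<in>{m..M}. u > 0"
          show ?thesis
          proof (rule inv2[where Cf="AA a0 a1 a2" and g="\<lambda>u. u ^ 3"])
            show "(x has_real_derivative AA a0 a1 a2 t * (x t) ^ 3) (at t within {0..1})" if "t \<in> {0..1}" for t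
              using sol_D[OF x that] eqd by simp
          qed (use rng pos Ai in \<open>auto intro: continuous_intros\<close>)
        next
          assume neg: "\<forall>u\<in>{m..M}. u < 0"
          show ?thesis
          proof (rule inv2[where Cf="\<lambda>t. - AA a0 a1 a2 t" and g="\<lambda>u. - (u ^ 3)"])
            show "(x has_real_derivative (- AA a0 a1 a2 t) * (- ((x t) ^ 3))) (at t within {0..1})" if "t \<in> {0..1}" for t
              using sol_D[OF x that] eqd by simp
            show "((\<lambda>t. - AA a0 a1 a2 t) has_integral 0) {0..1}" using has_integral_neg[OF Ai] by simp
            show "- (u ^ 3) > 0" if "u \<in> {m..M}" for u using neg that by (simp add: power3_eq_cube mult_neg_neg mult_pos_neg)
            show "continuous_on {m..M} (\<lambda>u. - (u ^ 3))" by (intro continuous_intros)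
          qed (use rng in \<open>auto intro: continuous_intros\<close>)
        qed
      next
        case False
        have lamA: "a1 = lam * b1" "a2 = lam * b2"
          using False cr by (auto simp: lam_def field_simps)
        have AB: "AA a0 a1 a2 t = lam * BB b0 b1 b2 t" for t
          using lamA A0 B0 by (simp add: trig_def algebra_simps)
        have eqd: "ff a0 a1 a2 b0 b1 b2 t u = BB b0 b1 b2 t * (u ^ 2 * (lam * u + 1))" for t u
          by (simp add: rhs_eq AB algebra_simps power2_eq_square power3_eq_cube)
        have Bi: "(BB b0 b1 b2 has_integral 0) {0..1}" using trig_integral[of b0 b1 b2] B0 by simp
        have gpos: "u ^ 2 * (lam * u + 1) > 0" if "u \<in> {m..M}" for u
        proof -
          have u0: "u \<noteq> 0" using sgn that by auto
          have "\<bar>lam * u\<bar> < 1"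
          proof -
            have "\<bar>lam * u\<bar> = \<bar>lam\<bar> * \<bar>u\<bar>" by (simp add: abs_mult)
            also have "\<dots> \<le> \<bar>lam\<bar> * (1 / (\<bar>lam\<bar> + 2))" using small[OF that] by (intro mult_left_mono) auto
            also have "\<dots> < 1" by (simp add: field_simps)
            finally show ?thesis .
          qed
          then have "lam * u + 1 > 0" by linarith
          then show ?thesis using u0 by simp
        qed
        show ?thesis
        proof (rule inv2[where Cf="BB b0 b1 b2" and g="\<lambda>u. u ^ 2 * (lam * u + 1)"])
          show "(x has_real_derivative BB b0 b1 b2 t * ((x t) ^ 2 * (lam * x t + 1))) (at t within {0..1})" if "t \<in> {0..1}" for t
            using sol_D[OF x that] eqd by simp
          show "continuous_on {m..M} (\<lambda>u. u ^ 2 * (lam * u + 1))" by (intro continuous_intros)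
        qed (use rng gpos Bi in \<open>auto intro: continuous_intros\<close>)
      qed
    qed
    show "\<exists>x. abel_periodic_orbit a0 a1 a2 b0 b1 b2 x \<and> x 0 = \<xi>"
      using x x0 per by (auto simp: abel_periodic_orbit_def)
  qed
qed

end

lemma deriv_bound:
  fixes x :: "real \<Rightarrow> real"
  assumes d: "\<And>t. t \<in> {0..1} \<Longrightarrow> (x has_real_derivative x' t) (at t within {0..1})"
    and b: "\<And>t. t \<in> {0..1} \<Longrightarrow> \<bar>x' t\<bar> \<le> Bd" and t: "t \<in> {0..1}"
  shows "\<bar>x t - x 0\<bar> \<le> Bd * t"
proof -
  have "(\<lambda>s. Bd * s - x s) 0 \<le> (\<lambda>s. Bd * s - x s) t"
  proof (rule mono_deriv[where f="\<lambda>s. Bd * s - x s" and f'="\<lambda>s. Bd - x' s" and a=0 and b=1])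
    fix s :: real assume s: "s \<in> {0..1}"
    show "((\<lambda>s. Bd * s - x s) has_real_derivative Bd - x' s) (at s within {0..1})"
      by (rule derivative_eq_intros d[OF s] refl | simp)+
    show "Bd - x' s \<ge> 0" using b[OF s] by linarith
  qed (use t in auto)
  moreover have "(\<lambda>s. Bd * s + x s) 0 \<le> (\<lambda>s. Bd * s + x s) t"
  proof (rule mono_deriv[where f="\<lambda>s. Bd * s + x s" and f'="\<lambda>s. Bd + x' s" and a=0 and b=1])
    fix s :: real assume s: "s \<in> {0..1}"
    show "((\<lambda>s. Bd * s + x s) has_real_derivative Bd + x' s) (at s within {0..1})"
      by (rule derivative_eq_intros d[OF s] refl | simp)+
    show "Bd + x' s \<ge> 0" using b[OF s] by linarith
  qed (use t in auto)
  ultimately show ?thesis by auto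
qed

lemma abs_int_const:
  fixes f :: "real \<Rightarrow> real"
  assumes "continuous_on {0..1} f" "\<And>t. t \<in> {0..1} \<Longrightarrow> \<bar>f t\<bar> \<le> c"
  shows "\<bar>integral {0..1} f\<bar> \<le> c"
proof -
  have "\<bar>integral {0..1} f\<bar> \<le> integral {0..1} (\<lambda>t::real. c)"
    by (rule abs_integral_bound) (use assms in \<open>auto intro: integrable_continuous_interval\<close>)
  then show ?thesis by simp
qed

context fixes a0 a1 a2 b0 b1 b2 :: real
begin

lemma orbit_I3:
  assumes x: "sol a0 a1 a2 b0 b1 b2 x" and per: "x 0 = x 1" and nz: "\<And>t. t \<in> {0..1} \<Longrightarrow> x t \<noteq> 0"
  shows "((\<lambda>t. AA a0 a1 a2 t + BB b0 b1 b2 t / x t) has_integral 0) {0..1}"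
proof -
  have "((\<lambda>t. (\<lambda>u. 1 / u^3) (x t) * ff a0 a1 a2 b0 b1 b2 t (x t)) has_integral 0) {0..1}"
    by (rule orbit_int[OF x per]) (intro continuous_intros, use nz in auto)
  moreover have "(\<lambda>u. 1 / u^3) (x t) * ff a0 a1 a2 b0 b1 b2 t (x t) = AA a0 a1 a2 t + BB b0 b1 b2 t / x t"
    if "t \<in> {0..1}" for t
    using nz[OF that] by (simp add: rhs_eq field_simps power2_eq_square power3_eq_cube)
  ultimately show ?thesis using has_integral_cong by (smt (verit, ccfv_SIG))
qed

lemma center_imp:
  assumes cen: "abel_center a0 a1 a2 b0 b1 b2"
  shows "a0 = 0 \<and> b0 = 0 \<and> a2 * b1 - a1 * b2 = 0"
proof -
  obtain e where e: "e > 0" and ce: "\<And>\<xi>. \<bar>\<xi>\<bar> < e \<Longrightarrow> \<exists>x. abel_periodic_orbit a0 a1 a2 b0 b1 b2 x \<and> x 0 = \<xi>"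
    using cen unfolding abel_center_def by blast
  obtain \<eta> C where \<eta>: "\<eta> > 0" and C: "C \<ge> 1"
    and ss: "\<And>\<xi>. \<bar>\<xi>\<bar> < \<eta> \<Longrightarrow> \<exists>x. sol a0 a1 a2 b0 b1 b2 x \<and> x 0 = \<xi> \<and> (\<forall>t\<in>{0..1}. \<bar>x t\<bar> \<le> C * \<bar>\<xi>\<bar>)"
    using small_sol by blast
  define K where "K = KK a0 a1 a2 b0 b1 b2"
  have K0: "K \<ge> 0" and KA: "\<And>t. \<bar>AA a0 a1 a2 t\<bar> \<le> K" and KB: "\<And>t. \<bar>BB b0 b1 b2 t\<bar> \<le> K"
    using KK_bounds unfolding K_def by blast+
  define \<eta>1 where "\<eta>1 = min e (min \<eta> 1)"
  have \<eta>1: "\<eta>1 > 0" using e \<eta> by (simp add: \<eta>1_def)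
  have SO: "\<exists>x. sol a0 a1 a2 b0 b1 b2 x \<and> x 0 = \<xi> \<and> x 1 = \<xi> \<and> (\<forall>t\<in>{0..1}. 0 < x t \<and> x t \<le> C * \<xi>)"
    if \<xi>: "0 < \<xi>" "\<xi> < \<eta>1" for \<xi>
  proof -
    obtain x where x: "abel_periodic_orbit a0 a1 a2 b0 b1 b2 x" "x 0 = \<xi>" using ce[of \<xi>] \<xi> by (auto simp: \<eta>1_def)
    obtain y where y: "sol a0 a1 a2 b0 b1 b2 y" "y 0 = \<xi>" "\<forall>t\<in>{0..1}. \<bar>y t\<bar> \<le> C * \<bar>\<xi>\<bar>"
      using ss[of \<xi>] \<xi> by (auto simp: \<eta>1_def)
    have xs: "sol a0 a1 a2 b0 b1 b2 x" and per: "x 0 = x 1" using x by (auto simp: abel_periodic_orbit_def)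
    have eq: "x t = y t" if "t \<in> {0..1}" for t using sol_unique[OF xs y(1), of 0 t] x y that by auto
    show ?thesis
      using xs x(2) per eq y(3) sol_pos[OF xs] \<xi> by (intro exI[of _ x]) auto
  qed
  have bnd: "\<bar>x t - \<xi>\<bar> \<le> 2 * K * C^3 * \<xi>^2"
    if x: "sol a0 a1 a2 b0 b1 b2 x" "x 0 = \<xi>" "\<forall>t\<in>{0..1}. 0 < x t \<and> x t \<le> C * \<xi>" and \<xi>: "0 < \<xi>" "\<xi> < \<eta>1"
      and t: "t \<in> {0..1}" for x \<xi> t
  proof -
    have \<xi>1: "\<xi> \<le> 1" using \<xi> by (simp add: \<eta>1_def)
    have db: "\<bar>ff a0 a1 a2 b0 b1 b2 s (x s)\<bar> \<le> 2 * K * C^3 * \<xi>^2" if s: "s \<in> {0..1}" for s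
    proof -
      have "0 < x s \<and> x s \<le> C * \<xi>" using x(3) s by blast
      then have xs0: "0 \<le> x s" "x s \<le> C * \<xi>" by auto
      have p3: "x s ^ 3 \<le> C^3 * \<xi>^2"
      proof -
        have "x s ^ 3 \<le> (C * \<xi>) ^ 3" by (rule power_mono[OF xs0(2) xs0(1)])
        also have "\<dots> = C^3 * \<xi>^2 * \<xi>" by (simp add: power_mult_distrib power3_eq_cube power2_eq_square)
        also have "\<dots> \<le> C^3 * \<xi>^2" using \<xi>1 \<xi> C by (intro mult_left_le) auto
        finally show ?thesis .
      qed
      have p2: "x s ^ 2 \<le> C^3 * \<xi>^2"
      proof -
        have "x s ^ 2 \<le> (C * \<xi>) ^ 2" by (rule power_mono[OF xs0(2) xs0(1)])
        also have "\<dots> = C^2 * \<xi>^2" by (simp add: power_mult_distrib)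
        also have "\<dots> \<le> C^3 * \<xi>^2"
        proof -
          have "C^2 \<le> C^3" using C by (simp add: power_increasing)
          then show ?thesis by (intro mult_right_mono) auto
        qed
        finally show ?thesis .
      qed
      have "\<bar>ff a0 a1 a2 b0 b1 b2 s (x s)\<bar> \<le> \<bar>AA a0 a1 a2 s\<bar> * x s ^ 3 + \<bar>BB b0 b1 b2 s\<bar> * x s ^ 2"
      proof -
        have "\<bar>AA a0 a1 a2 s * x s ^ 3 + BB b0 b1 b2 s * x s ^ 2\<bar> \<le> \<bar>AA a0 a1 a2 s * x s ^ 3\<bar> + \<bar>BB b0 b1 b2 s * x s ^ 2\<bar>"
          by (rule abs_triangle_ineq)
        also have "\<dots> = \<bar>AA a0 a1 a2 s\<bar> * x s ^ 3 + \<bar>BB b0 b1 b2 s\<bar> * x s ^ 2"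
          using xs0 by (simp add: abs_mult)
        finally show ?thesis unfolding rhs_eq .
      qed
      also have "\<dots> \<le> K * (C^3 * \<xi>^2) + K * (C^3 * \<xi>^2)"
        using KA KB p2 p3 xs0 K0 by (intro add_mono mult_mono) auto
      finally show ?thesis by simp
    qed
    have "\<bar>x t - x 0\<bar> \<le> 2 * K * C^3 * \<xi>^2 * t"
      by (rule deriv_bound[OF sol_D[OF x(1)] db t])
    also have "\<dots> \<le> 2 * K * C^3 * \<xi>^2" using t K0 C by (intro mult_left_le) auto
    finally show ?thesis using x(2) by simp
  qed
  have B0: "b0 = 0"
  proof (rule small_zero[OF \<eta>1, of "K * C"])
    show "K * C \<ge> 0" using K0 C by simp
    fix \<xi> :: real assume \<xi>: "0 < \<xi>" "\<xi> < \<eta>1"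
    obtain x where x: "sol a0 a1 a2 b0 b1 b2 x" "x 0 = \<xi>" "x 1 = \<xi>" "\<forall>t\<in>{0..1}. 0 < x t \<and> x t \<le> C * \<xi>"
      using SO[OF \<xi>] by blast
    have nz: "\<And>t. t \<in> {0..1} \<Longrightarrow> x t \<noteq> 0" using x(4) by force
    have xc: "continuous_on {0..1} x" by (rule sol_cont[OF x(1)])
    have "((\<lambda>t. (AA a0 a1 a2 t * x t + BB b0 b1 b2 t) - BB b0 b1 b2 t) has_integral 0 - b0) {0..1}"
      by (intro has_integral_diff orbit_I2[OF x(1) _ nz] trig_integral) (use x in simp)
    then have "((\<lambda>t. AA a0 a1 a2 t * x t) has_integral - b0) {0..1}" by simp
    then have eqi: "integral {0..1} (\<lambda>t. AA a0 a1 a2 t * x t) = - b0" by (rule integral_unique)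
    have "\<bar>integral {0..1} (\<lambda>t. AA a0 a1 a2 t * x t)\<bar> \<le> K * (C * \<xi>)"
    proof (rule abs_int_const)
      show "continuous_on {0..1} (\<lambda>t. AA a0 a1 a2 t * x t)" by (intro continuous_intros xc)
      fix t :: real assume t: "t \<in> {0..1}"
      have "0 < x t \<and> x t \<le> C * \<xi>" using x(4) t by blast
      then show "\<bar>AA a0 a1 a2 t * x t\<bar> \<le> K * (C * \<xi>)"
        unfolding abs_mult using KA K0 by (intro mult_mono) auto
    qed
    then show "\<bar>b0\<bar> \<le> K * C * \<xi>" using eqi by (simp add: mult.assoc)
  qed
  have Beq: "BB b0 b1 b2 t = trig 0 b1 b2 t" for t using B0 by simp
  obtain Kb where Kb0: "Kb \<ge> 0" and Kb: "\<And>t. t \<in> {0..1} \<Longrightarrow> \<bar>betaf b1 b2 t\<bar> \<le> Kb"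
    using cont_bounded[OF betaf_cont[of "{0..1}" b1 b2]] by blast
  have key: "((\<lambda>t. betaf b1 b2 t * AA a0 a1 a2 t * x t) has_integral - a0) {0..1}"
    if x: "sol a0 a1 a2 b0 b1 b2 x" "x 0 = \<xi>" "x 1 = \<xi>" "\<forall>t\<in>{0..1}. 0 < x t \<and> x t \<le> C * \<xi>" for x \<xi>
  proof -
    have nz: "\<And>t. t \<in> {0..1} \<Longrightarrow> x t \<noteq> 0" using x(4) by force
    have per: "x 0 = x 1" using x by simp
    have I3: "((\<lambda>t. AA a0 a1 a2 t + BB b0 b1 b2 t / x t) has_integral 0) {0..1}" by (rule orbit_I3[OF x(1) per nz])
    have IB: "((\<lambda>t. (AA a0 a1 a2 t + BB b0 b1 b2 t / x t) - AA a0 a1 a2 t) has_integral 0 - a0) {0..1}"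
      by (intro has_integral_diff I3 trig_integral)
    have F1: "((\<lambda>t. BB b0 b1 b2 t / x t - betaf b1 b2 t * (AA a0 a1 a2 t * x t + BB b0 b1 b2 t)) has_integral
        (\<lambda>t. betaf b1 b2 t / x t) 1 - (\<lambda>t. betaf b1 b2 t / x t) 0) {0..1}"
    proof (rule ftc_real)
      fix t :: real assume t: "t \<in> {0..1}"
      have "((\<lambda>t. betaf b1 b2 t / x t) has_real_derivative
          (trig 0 b1 b2 t * x t - betaf b1 b2 t * ff a0 a1 a2 b0 b1 b2 t (x t)) / (x t * x t)) (at t within {0..1})"
        by (rule derivative_eq_intros betaf_deriv sol_D[OF x(1) t] refl | use nz[OF t] in simp)+
      moreover have "(trig 0 b1 b2 t * x t - betaf b1 b2 t * ff a0 a1 a2 b0 b1 b2 t (x t)) / (x t * x t)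
          = BB b0 b1 b2 t / x t - betaf b1 b2 t * (AA a0 a1 a2 t * x t + BB b0 b1 b2 t)"
        using nz[OF t] by (simp add: Beq rhs_eq field_simps power2_eq_square power3_eq_cube)
      ultimately show "((\<lambda>t. betaf b1 b2 t / x t) has_real_derivative BB b0 b1 b2 t / x t - betaf b1 b2 t * (AA a0 a1 a2 t * x t + BB b0 b1 b2 t)) (at t within {0..1})"
        by simp
    qed simp
    have F2: "((\<lambda>t. betaf b1 b2 t * BB b0 b1 b2 t) has_integral
        (\<lambda>t. betaf b1 b2 t ^ 2 / 2) 1 - (\<lambda>t. betaf b1 b2 t ^ 2 / 2) 0) {0..1}"
    proof (rule ftc_real)
      fix t :: real assume t: "t \<in> {0..1}"
      show "((\<lambda>t. betaf b1 b2 t ^ 2 / 2) has_real_derivative betaf b1 b2 t * BB b0 b1 b2 t) (at t within {0..1})"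
        by (rule derivative_eq_intros betaf_deriv refl | simp add: Beq)+
    qed simp
    have S: "((\<lambda>t. ((AA a0 a1 a2 t + BB b0 b1 b2 t / x t) - AA a0 a1 a2 t)
        - (BB b0 b1 b2 t / x t - betaf b1 b2 t * (AA a0 a1 a2 t * x t + BB b0 b1 b2 t))
        - betaf b1 b2 t * BB b0 b1 b2 t) has_integral (0 - a0) - 0 - 0) {0..1}"
      using has_integral_diff[OF has_integral_diff[OF IB F1] F2] by (simp add: betaf_01)
    show ?thesis
      by (rule has_integral_cong[THEN iffD1, OF _ S[simplified]]) (simp add: algebra_simps)
  qed
  have A0: "a0 = 0"
  proof (rule small_zero[OF \<eta>1, of "Kb * K * C"])
    show "Kb * K * C \<ge> 0" using K0 C Kb0 by simp
    fix \<xi> :: real assume \<xi>: "0 < \<xi>" "\<xi> < \<eta>1"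
    obtain x where x: "sol a0 a1 a2 b0 b1 b2 x" "x 0 = \<xi>" "x 1 = \<xi>" "\<forall>t\<in>{0..1}. 0 < x t \<and> x t \<le> C * \<xi>"
      using SO[OF \<xi>] by blast
    have xc: "continuous_on {0..1} x" by (rule sol_cont[OF x(1)])
    have eqi: "integral {0..1} (\<lambda>t. betaf b1 b2 t * AA a0 a1 a2 t * x t) = - a0"
      by (rule integral_unique[OF key[OF x]])
    have "\<bar>integral {0..1} (\<lambda>t. betaf b1 b2 t * AA a0 a1 a2 t * x t)\<bar> \<le> Kb * K * (C * \<xi>)"
    proof (rule abs_int_const)
      show "continuous_on {0..1} (\<lambda>t. betaf b1 b2 t * AA a0 a1 a2 t * x t)" by (intro continuous_intros xc)
      fix t :: real assume t: "t \<in> {0..1}"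
      have "0 < x t \<and> x t \<le> C * \<xi>" using x(4) t by blast
      then show "\<bar>betaf b1 b2 t * AA a0 a1 a2 t * x t\<bar> \<le> Kb * K * (C * \<xi>)"
        unfolding abs_mult using KA Kb[OF t] K0 Kb0 by (intro mult_mono) auto
    qed
    then show "\<bar>a0\<bar> \<le> Kb * K * C * \<xi>" using eqi by (simp add: mult.assoc)
  qed
  have Aeq: "AA a0 a1 a2 t = trig 0 a1 a2 t" for t using A0 by simp
  have CR: "(a2 * b1 - a1 * b2) / (4 * pi) = 0"
  proof (rule small_zero[OF \<eta>1, of "Kb * K * (2 * K * C^3)"])
    show "Kb * K * (2 * K * C^3) \<ge> 0" using K0 C Kb0 by simp
    fix \<xi> :: real assume \<xi>: "0 < \<xi>" "\<xi> < \<eta>1"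
    obtain x where x: "sol a0 a1 a2 b0 b1 b2 x" "x 0 = \<xi>" "x 1 = \<xi>" "\<forall>t\<in>{0..1}. 0 < x t \<and> x t \<le> C * \<xi>"
      using SO[OF \<xi>] by blast
    have xc: "continuous_on {0..1} x" by (rule sol_cont[OF x(1)])
    have k0: "((\<lambda>t. betaf b1 b2 t * AA a0 a1 a2 t * x t) has_integral 0) {0..1}" using key[OF x] A0 by simp
    have k1: "((\<lambda>t. \<xi> * (betaf b1 b2 t * AA a0 a1 a2 t)) has_integral \<xi> * ((a2 * b1 - a1 * b2) / (4 * pi))) {0..1}"
      by (intro has_integral_mult_right) (use betaA_integral[of b1 b2 a1 a2] Aeq in simp)
    have "((\<lambda>t. \<xi> * (betaf b1 b2 t * AA a0 a1 a2 t) - betaf b1 b2 t * AA a0 a1 a2 t * x t) has_integral \<xi> * ((a2 * b1 - a1 * b2) / (4 * pi)) - 0) {0..1}"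
      by (rule has_integral_diff[OF k1 k0])
    then have eqi: "integral {0..1} (\<lambda>t. betaf b1 b2 t * AA a0 a1 a2 t * (\<xi> - x t)) = \<xi> * ((a2 * b1 - a1 * b2) / (4 * pi))"
      by (intro integral_unique) (simp add: algebra_simps)
    have "\<bar>integral {0..1} (\<lambda>t. betaf b1 b2 t * AA a0 a1 a2 t * (\<xi> - x t))\<bar> \<le> Kb * K * (2 * K * C^3 * \<xi>^2)"
    proof (rule abs_int_const)
      show "continuous_on {0..1} (\<lambda>t. betaf b1 b2 t * AA a0 a1 a2 t * (\<xi> - x t))" by (intro continuous_intros xc)
      fix t :: real assume t: "t \<in> {0..1}"
      have "\<bar>\<xi> - x t\<bar> \<le> 2 * K * C^3 * \<xi>^2" using bnd[OF x(1,2,4) \<xi> t] by (simp add: abs_minus_commute)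
      then show "\<bar>betaf b1 b2 t * AA a0 a1 a2 t * (\<xi> - x t)\<bar> \<le> Kb * K * (2 * K * C^3 * \<xi>^2)"
        unfolding abs_mult using KA Kb[OF t] K0 Kb0 by (intro mult_mono) auto
    qed
    then have h1: "\<bar>\<xi> * ((a2 * b1 - a1 * b2) / (4 * pi))\<bar> \<le> Kb * K * (2 * K * C^3 * \<xi>^2)"
      unfolding eqi .
    have E1: "\<bar>\<xi> * ((a2 * b1 - a1 * b2) / (4 * pi))\<bar> = \<xi> * \<bar>(a2 * b1 - a1 * b2) / (4 * pi)\<bar>"
      using \<xi> by (simp only: abs_mult abs_of_pos)
    have E2: "Kb * K * (2 * K * C^3 * \<xi>^2) = \<xi> * (Kb * K * (2 * K * C^3) * \<xi>)"
      by (simp add: power2_eq_square algebra_simps)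
    have "\<xi> * \<bar>(a2 * b1 - a1 * b2) / (4 * pi)\<bar> \<le> \<xi> * (Kb * K * (2 * K * C^3) * \<xi>)"
      using h1 unfolding E1 E2 .
    then show "\<bar>(a2 * b1 - a1 * b2) / (4 * pi)\<bar> \<le> Kb * K * (2 * K * C^3) * \<xi>"
      using \<xi>(1) by (rule mult_left_le_imp_le)
  qed
  then have "a2 * b1 - a1 * b2 = 0" by simp
  then show ?thesis using A0 B0 by simp
qed

end

lemma integral_reflect01:
  fixes F :: "real \<Rightarrow> real"
  assumes Fc: "continuous_on {0..1} F"
  shows "integral {0..1} (\<lambda>t. F (1 - t)) = integral {0..1} F"
proof -
  define \<Phi> where "\<Phi> s = integral {0..s} F" for s
  have PD: "(\<Phi> has_real_derivative F s) (at s within {0..1})" if "s \<in> {0..1}" for s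
    unfolding \<Phi>_def by (rule integral_has_real_derivative[OF Fc that])
  have img: "(\<lambda>t. 1 - t) ` {0..1} = {0..1::real}"
    by (auto simp: image_iff intro!: bexI[of _ "1 - _"])
  have "((\<lambda>t. F (1 - t)) has_integral (\<lambda>t. - \<Phi> (1 - t)) 1 - (\<lambda>t. - \<Phi> (1 - t)) 0) {0..1}"
  proof (rule ftc_real)
    fix t :: real assume t: "t \<in> {0..1}"
    have "((\<Phi> \<circ> (\<lambda>t. 1 - t)) has_real_derivative F (1 - t) * (- 1)) (at t within {0..1})"
    proof (rule DERIV_image_chain)
      show "(\<Phi> has_real_derivative F (1 - t)) (at (1 - t) within (\<lambda>t. 1 - t) ` {0..1})"
        unfolding img by (rule PD) (use t in auto)
      show "((\<lambda>t. 1 - t) has_real_derivative - 1) (at t within {0..1})"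
        by (rule derivative_eq_intros refl | simp)+
    qed
    then have "((\<lambda>t. - (\<Phi> \<circ> (\<lambda>t. 1 - t)) t) has_real_derivative F (1 - t)) (at t within {0..1})"
      using DERIV_minus by fastforce
    then show "((\<lambda>t. - \<Phi> (1 - t)) has_real_derivative F (1 - t)) (at t within {0..1})" by (simp add: o_def)
  qed simp
  then have "integral {0..1} (\<lambda>t. F (1 - t)) = \<Phi> 1 - \<Phi> 0" by (simp add: integral_unique)
  then show ?thesis by (simp add: \<Phi>_def)
qed

lemma var_const_bounds:
  fixes z G r :: "real \<Rightarrow> real"
  assumes d: "\<And>t. t \<in> {0..1} \<Longrightarrow> (z has_real_derivative G t * z t + r t) (at t within {0..1})"
    and Gc: "continuous_on {0..1} G" and GL: "\<And>t. t \<in> {0..1} \<Longrightarrow> \<bar>G t\<bar> \<le> L"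
    and z0: "z 0 = 0" and rl: "\<And>t. t \<in> {0..1} \<Longrightarrow> lo \<le> r t" and rh: "\<And>t. t \<in> {0..1} \<Longrightarrow> r t \<le> hi"
    and lo: "0 \<le> lo"
  shows "lo * exp (- 2 * L) \<le> z 1" "z 1 \<le> hi * exp (2 * L)"
proof -
  define \<Gamma> where "\<Gamma> t = integral {0..t} G" for t
  have GD: "(\<Gamma> has_real_derivative G t) (at t within {0..1})" if "t \<in> {0..1}" for t
    unfolding \<Gamma>_def by (rule integral_has_real_derivative[OF Gc that])
  have L0: "L \<ge> 0" using GL[of 0] by auto
  have \<Gamma>b: "\<bar>\<Gamma> t\<bar> \<le> L" if t: "t \<in> {0..1}" for t
  proof -
    have "\<bar>\<Gamma> t\<bar> \<le> integral {0..t} (\<lambda>s::real. L)" unfolding \<Gamma>_def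
      by (rule abs_integral_bound) (use t GL Gc in \<open>auto intro: cont_integrable_sub\<close>)
    also have "\<dots> = L * t" using t by simp
    also have "\<dots> \<le> L" using t L0 by (auto intro: mult_left_le)
    finally show ?thesis .
  qed
  define \<phi> where "\<phi> t = z t * exp (- \<Gamma> t)" for t
  have \<phi>D: "(\<phi> has_real_derivative r t * exp (- \<Gamma> t)) (at t within {0..1})" if t: "t \<in> {0..1}" for t
  proof -
    have "(\<phi> has_real_derivative (G t * z t + r t) * exp (- \<Gamma> t) + z t * (exp (- \<Gamma> t) * - G t)) (at t within {0..1})"
      unfolding \<phi>_def by (rule derivative_eq_intros d[OF t] GD[OF t] refl | simp)+
    then show ?thesis by (simp add: algebra_simps)
  qed
  have e1: "exp (- L) \<le> exp (- \<Gamma> t)" "exp (- \<Gamma> t) \<le> exp L" if "t \<in> {0..1}" for t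
    using \<Gamma>b[OF that] by auto
  have low: "(\<lambda>t. \<phi> t - lo * exp (- L) * t) 0 \<le> (\<lambda>t. \<phi> t - lo * exp (- L) * t) 1"
  proof (rule mono_deriv[where f="\<lambda>t. \<phi> t - lo * exp (- L) * t" and f'="\<lambda>t. r t * exp (- \<Gamma> t) - lo * exp (- L)" and a=0 and b=1])
    fix t :: real assume t: "t \<in> {0..1}"
    show "((\<lambda>t. \<phi> t - lo * exp (- L) * t) has_real_derivative r t * exp (- \<Gamma> t) - lo * exp (- L)) (at t within {0..1})"
      by (rule derivative_eq_intros \<phi>D[OF t] refl | simp)+
    have "lo * exp (- L) \<le> r t * exp (- \<Gamma> t)" using rl[OF t] lo e1[OF t] by (intro mult_mono) auto
    then show "0 \<le> r t * exp (- \<Gamma> t) - lo * exp (- L)" by simp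
  qed auto
  have high: "(\<lambda>t. hi * exp L * t - \<phi> t) 0 \<le> (\<lambda>t. hi * exp L * t - \<phi> t) 1"
  proof (rule mono_deriv[where f="\<lambda>t. hi * exp L * t - \<phi> t" and f'="\<lambda>t. hi * exp L - r t * exp (- \<Gamma> t)" and a=0 and b=1])
    fix t :: real assume t: "t \<in> {0..1}"
    show "((\<lambda>t. hi * exp L * t - \<phi> t) has_real_derivative hi * exp L - r t * exp (- \<Gamma> t)) (at t within {0..1})"
      by (rule derivative_eq_intros \<phi>D[OF t] refl | simp)+
    have "r t * exp (- \<Gamma> t) \<le> hi * exp L" using rh[OF t] rl[OF t] lo e1[OF t] by (intro mult_mono) auto
    then show "0 \<le> hi * exp L - r t * exp (- \<Gamma> t)" by simp
  qed auto
  have p0: "\<phi> 0 = 0" by (simp add: \<phi>_def z0)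
  have z1: "z 1 = \<phi> 1 * exp (\<Gamma> 1)" by (simp add: \<phi>_def exp_minus)
  have g1: "exp (- L) \<le> exp (\<Gamma> 1)" "exp (\<Gamma> 1) \<le> exp L" using \<Gamma>b[of 1] by auto
  have phl: "lo * exp (- L) \<le> \<phi> 1" using low p0 by simp
  have phh: "\<phi> 1 \<le> hi * exp L" using high p0 by simp
  have ph0: "0 \<le> \<phi> 1" using phl lo by (meson exp_ge_zero mult_nonneg_nonneg order_trans)
  have "lo * exp (- L) * exp (- L) \<le> \<phi> 1 * exp (\<Gamma> 1)"
    using phl g1 lo ph0 by (intro mult_mono) auto
  moreover have "exp (- L) * exp (- L) = exp (- 2 * L)" by (simp add: exp_add[symmetric])
  ultimately show "lo * exp (- 2 * L) \<le> z 1" unfolding z1 by (simp add: mult.assoc)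
  have hi0: "hi \<ge> 0" using rl[of 0] rh[of 0] lo by auto
  have "\<phi> 1 * exp (\<Gamma> 1) \<le> hi * exp L * exp L"
    using phh g1 ph0 hi0 by (intro mult_mono) auto
  moreover have "exp L * exp L = exp (2 * L)" by (simp add: exp_add[symmetric])
  ultimately show "z 1 \<le> hi * exp (2 * L)" unfolding z1 by (simp add: mult.assoc)
qed

abbreviation "solc b \<equiv> abel_solution 0 0 1 b 1 0"
abbreviation "Pc b \<equiv> abel_poincare 0 0 1 b 1 0"

lemma sin_refl: "sin (2*pi*(1-t)) = - sin (2*pi*t)"
  by (simp add: right_diff_distrib sin_diff)
lemma cos_refl: "cos (2*pi*(1-t)) = cos (2*pi*t)"
  by (simp add: right_diff_distrib cos_diff)

lemma mirror_sol:
  assumes x: "solc b x"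
  shows "solc b (\<lambda>t. - x (1 - t))"
  unfolding abel_solution_def
proof
  fix t :: real assume t: "t \<in> {0..1}"
  have img: "(\<lambda>t. 1 - t) ` {0..1} = {0..1::real}"
    by (auto simp: image_iff intro!: bexI[of _ "1 - _"])
  have "((x \<circ> (\<lambda>t. 1 - t)) has_real_derivative abel_rhs 0 0 1 b 1 0 (1 - t) (x (1 - t)) * (- 1)) (at t within {0..1})"
  proof (rule DERIV_image_chain)
    show "(x has_real_derivative abel_rhs 0 0 1 b 1 0 (1 - t) (x (1 - t))) (at (1 - t) within (\<lambda>t. 1 - t) ` {0..1})"
      unfolding img by (rule sol_D[OF x]) (use t in auto)
    show "((\<lambda>t. 1 - t) has_real_derivative - 1) (at t within {0..1})"
      by (rule derivative_eq_intros refl | simp)+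
  qed
  then have "((\<lambda>t. - (x \<circ> (\<lambda>t. 1 - t)) t) has_real_derivative abel_rhs 0 0 1 b 1 0 (1 - t) (x (1 - t))) (at t within {0..1})"
    using DERIV_minus by fastforce
  moreover have "abel_rhs 0 0 1 b 1 0 (1 - t) (x (1 - t)) = abel_rhs 0 0 1 b 1 0 t (- x (1 - t))"
    by (simp add: rhs_eq trig_def sin_refl cos_refl power3_eq_cube power2_eq_square)
  ultimately show "((\<lambda>t. - x (1 - t)) has_real_derivative abel_rhs 0 0 1 b 1 0 t (- x (1 - t))) (at t within {0..1})"
    by (simp add: o_def)
qed

lemma mirror_M:
  assumes x: "solc b x"
  shows "integral {0..1} (\<lambda>t. 3 * trig 0 0 1 t * (- x (1 - t)) ^ 2 + 2 * trig b 1 0 t * (- x (1 - t)))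
       = - integral {0..1} (\<lambda>t. 3 * trig 0 0 1 t * x t ^ 2 + 2 * trig b 1 0 t * x t)"
proof -
  define F where "F = (\<lambda>t. 3 * trig 0 0 1 t * x t ^ 2 + 2 * trig b 1 0 t * x t)"
  have Fc: "continuous_on {0..1} F" unfolding F_def using sol_cont[OF x] by (intro continuous_intros)
  have Frc: "continuous_on {0..1} (\<lambda>t. F (1 - t))"
    by (rule continuous_on_compose2[OF Fc]) (auto intro: continuous_intros)
  have eq1: "(\<lambda>t. 3 * trig 0 0 1 t * (- x (1 - t)) ^ 2 + 2 * trig b 1 0 t * (- x (1 - t))) = (\<lambda>t. - F (1 - t))"
    by (simp add: F_def fun_eq_iff trig_def sin_refl cos_refl)
  have "integral {0..1} (\<lambda>t. - F (1 - t)) = - integral {0..1} (\<lambda>t. F (1 - t))"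
    by (rule integral_neg)
  also have "\<dots> = - integral {0..1} F" using integral_reflect01[OF Fc] by simp
  finally show ?thesis unfolding eq1 F_def .
qed

lemma KKc: "\<bar>b\<bar> \<le> 1 \<Longrightarrow> KK 0 0 1 b 1 0 \<le> 3"
  by (simp add: KK_def)

lemma c_exist:
  assumes b: "\<bar>b\<bar> \<le> 1" and \<xi>: "\<bar>\<xi>\<bar> < exp (-15)"
  shows "\<exists>x. solc b x \<and> x 0 = \<xi> \<and> (\<forall>t\<in>{0..1}. \<bar>x t\<bar> \<le> exp 15 * \<bar>\<xi>\<bar>)"
proof -
  define L where "L = 3 * KK 0 0 1 b 1 0 * (0+1)^2 + 2 * KK 0 0 1 b 1 0 * (0+1)"
  have L15: "L \<le> 15" using KKc[OF b] by (simp add: L_def)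
  have "\<bar>\<xi> - 0\<bar> < exp (-L)" using \<xi> L15 by (smt (verit) exp_le_cancel_iff)
  then obtain x where x: "solc b x" "x 0 = \<xi>" "\<forall>t\<in>{0..1}. \<bar>x t - 0\<bar> \<le> exp L * \<bar>\<xi> - 0\<bar>"
    using exist_near[of 0 0 1 b 1 0 "\<lambda>t. 0" 0 L \<xi>] sol_zero[of 0 0 1 b 1 0] L_def by auto
  have "exp L * \<bar>\<xi>\<bar> \<le> exp 15 * \<bar>\<xi>\<bar>" using L15 by (intro mult_right_mono) auto
  then show ?thesis using x by (intro exI[of _ x]) force
qed

definition "cE = exp (15::real)"
definition "c\<xi>0 = min (exp (-15)) (1 / (12 * cE ^ 3))"
definition "cD1 = 6 * cE ^ 3"

lemma cE_ge1: "cE \<ge> 1" by (simp add: cE_def)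
lemma c\<xi>0_pos: "c\<xi>0 > 0" by (simp add: c\<xi>0_def cE_def)
lemma c\<xi>0_le: "c\<xi>0 \<le> 1/12"
proof -
  have "cE ^ 3 \<ge> 1" using cE_ge1 by simp
  then have "1 / (12 * cE ^ 3) \<le> 1/12" by (intro divide_left_mono) (auto simp: cE_def)
  then show ?thesis by (simp add: c\<xi>0_def)
qed

lemma c_sol:
  assumes b: "\<bar>b\<bar> \<le> 1" and \<xi>: "0 < \<xi>" "\<xi> < c\<xi>0"
  shows "\<exists>x. solc b x \<and> x 0 = \<xi> \<and> (\<forall>t\<in>{0..1}. \<bar>x t - \<xi>\<bar> \<le> cD1 * \<xi>^2 \<and> \<xi>/2 \<le> x t \<and> x t \<le> 2 * \<xi>)"
proof -
  have \<xi>e: "\<bar>\<xi>\<bar> < exp (-15)" using \<xi> by (simp add: c\<xi>0_def)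
  obtain x where x: "solc b x" "x 0 = \<xi>" "\<forall>t\<in>{0..1}. \<bar>x t\<bar> \<le> exp 15 * \<bar>\<xi>\<bar>"
    using c_exist[OF b \<xi>e] by blast
  have E1: "cE \<ge> 1" by (rule cE_ge1)
  have \<xi>1: "\<xi> \<le> 1" using \<xi> c\<xi>0_le by simp
  have xb: "\<bar>x t\<bar> \<le> cE * \<xi>" if "t \<in> {0..1}" for t using x(3) that \<xi> by (simp add: cE_def)
  have db: "\<bar>abel_rhs 0 0 1 b 1 0 s (x s)\<bar> \<le> cD1 * \<xi>^2" if s: "s \<in> {0..1}" for s
  proof -
    have p3: "\<bar>x s\<bar> ^ 3 \<le> cE^3 * \<xi>^2"
    proof -
      have "\<bar>x s\<bar> ^ 3 \<le> (cE * \<xi>) ^ 3" by (rule power_mono[OF xb[OF s]]) simp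
      also have "\<dots> = cE^3 * \<xi>^2 * \<xi>" by (simp add: power_mult_distrib power3_eq_cube power2_eq_square)
      also have "\<dots> \<le> cE^3 * \<xi>^2" using \<xi>1 \<xi> E1 by (intro mult_left_le) auto
      finally show ?thesis .
    qed
    have p2: "\<bar>x s\<bar> ^ 2 \<le> cE^3 * \<xi>^2"
    proof -
      have "\<bar>x s\<bar> ^ 2 \<le> (cE * \<xi>) ^ 2" by (rule power_mono[OF xb[OF s]]) simp
      also have "\<dots> = cE^2 * \<xi>^2" by (simp add: power_mult_distrib)
      also have "\<dots> \<le> cE^3 * \<xi>^2"
      proof -
        have "cE^2 \<le> cE^3" using E1 by (simp add: power_increasing)
        then show ?thesis by (intro mult_right_mono) auto
      qed
      finally show ?thesis .
    qed
    have "\<bar>abel_rhs 0 0 1 b 1 0 s (x s)\<bar> \<le> \<bar>trig 0 0 1 s\<bar> * \<bar>x s\<bar> ^ 3 + \<bar>trig b 1 0 s\<bar> * \<bar>x s\<bar> ^ 2"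
    proof -
      have "\<bar>abel_rhs 0 0 1 b 1 0 s (x s)\<bar> \<le> \<bar>trig 0 0 1 s * x s ^ 3\<bar> + \<bar>trig b 1 0 s * x s ^ 2\<bar>"
        unfolding rhs_eq by (rule abs_triangle_ineq)
      also have "\<dots> = \<bar>trig 0 0 1 s\<bar> * \<bar>x s\<bar> ^ 3 + \<bar>trig b 1 0 s\<bar> * \<bar>x s\<bar> ^ 2" by (simp add: abs_mult power_abs)
      finally show ?thesis .
    qed
    also have "\<dots> \<le> 3 * (cE^3 * \<xi>^2) + 3 * (cE^3 * \<xi>^2)"
    proof (intro add_mono mult_mono p2 p3)
      show "\<bar>trig 0 0 1 s\<bar> \<le> 3" "\<bar>trig b 1 0 s\<bar> \<le> 3"
        using trig_bound[of 0 0 1 s] trig_bound[of b 1 0 s] b by auto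
    qed auto
    finally show ?thesis by (simp add: cD1_def)
  qed
  have close: "\<bar>x t - \<xi>\<bar> \<le> cD1 * \<xi>^2" if t: "t \<in> {0..1}" for t
  proof -
    have "\<bar>x t - x 0\<bar> \<le> cD1 * \<xi>^2 * t" by (rule deriv_bound[OF sol_D[OF x(1)] db t])
    also have "\<dots> \<le> cD1 * \<xi>^2" using t by (intro mult_left_le) (auto simp: cD1_def cE_def)
    finally show ?thesis using x(2) by simp
  qed
  have half: "cD1 * \<xi>^2 \<le> \<xi> / 2"
  proof -
    have "\<xi> \<le> 1 / (12 * cE ^ 3)" using \<xi> by (simp add: c\<xi>0_def)
    then have "12 * cE^3 * \<xi> \<le> 1" using E1 by (simp add: field_simps)
    then have "cD1 * \<xi>^2 = (12 * cE^3 * \<xi>) * \<xi> / 2" by (simp add: cD1_def power2_eq_square)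
    also have "\<dots> \<le> 1 * \<xi> / 2" using \<open>12 * cE^3 * \<xi> \<le> 1\<close> \<xi> by (intro divide_right_mono mult_right_mono) auto
    finally show ?thesis by simp
  qed
  show ?thesis
    using x(1,2) close half \<xi> by (intro exI[of _ x]) (force simp: abs_le_iff)
qed

definition "cX b \<xi> = (SOME x. solc b x \<and> x 0 = \<xi> \<and> (\<forall>t\<in>{0..1}. \<bar>x t - \<xi>\<bar> \<le> cD1 * \<xi>^2 \<and> \<xi>/2 \<le> x t \<and> x t \<le> 2 * \<xi>))"
definition "cg b \<xi> = Pc b \<xi> - \<xi>"

lemma cX:
  assumes "\<bar>b\<bar> \<le> 1" "0 < \<xi>" "\<xi> < c\<xi>0"
  shows "solc b (cX b \<xi>) \<and> cX b \<xi> 0 = \<xi> \<and> (\<forall>t\<in>{0..1}. \<bar>cX b \<xi> t - \<xi>\<bar> \<le> cD1 * \<xi>^2 \<and> \<xi>/2 \<le> cX b \<xi> t \<and> cX b \<xi> t \<le> 2 * \<xi>)"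
proof -
  from c_sol[OF assms] show ?thesis unfolding cX_def by (rule someI_ex)
qed

lemma cg_cX:
  assumes "\<bar>b\<bar> \<le> 1" "0 < \<xi>" "\<xi> < c\<xi>0"
  shows "cg b \<xi> = cX b \<xi> 1 - \<xi>"
  using poincare_sol[of 0 0 1 b 1 0 "cX b \<xi>"] cX[OF assms] by (simp add: cg_def)

lemma c_rate:
  assumes b: "\<bar>b\<bar> \<le> 1" and b': "\<bar>b'\<bar> \<le> 1" and bb: "b \<le> b'" and \<xi>: "0 < \<xi>" "\<xi> < c\<xi>0"
  shows "(b' - b) * (\<xi>^2 / 4) * exp (- 20) \<le> cg b' \<xi> - cg b \<xi>"
    "cg b' \<xi> - cg b \<xi> \<le> (b' - b) * (4 * \<xi>^2) * exp 20"
proof -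
  define X where "X = cX b \<xi>"
  define Y where "Y = cX b' \<xi>"
  note XP = cX[OF b \<xi>, folded X_def] and YP = cX[OF b' \<xi>, folded Y_def]
  have \<xi>1: "2 * \<xi> \<le> 1" using \<xi> c\<xi>0_le by simp
  define G where "G t = trig 0 0 1 t * (Y t ^ 2 + Y t * X t + X t ^ 2) + trig b 1 0 t * (Y t + X t)" for t
  have Xc: "continuous_on {0..1} X" using sol_cont XP by blast
  have Yc: "continuous_on {0..1} Y" using sol_cont YP by blast
  have bounds: "lo * exp (- 2 * 10) \<le> (\<lambda>t. Y t - X t) 1" "(\<lambda>t. Y t - X t) 1 \<le> hi * exp (2 * 10)"
    if lo: "lo = (b' - b) * (\<xi>^2 / 4)" and hi: "hi = (b' - b) * (4 * \<xi>^2)" for lo hi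
  proof -
    have d: "((\<lambda>t. Y t - X t) has_real_derivative G t * (Y t - X t) + (b' - b) * Y t ^ 2) (at t within {0..1})"
      if t: "t \<in> {0..1}" for t
    proof -
      have "((\<lambda>t. Y t - X t) has_real_derivative abel_rhs 0 0 1 b' 1 0 t (Y t) - abel_rhs 0 0 1 b 1 0 t (X t)) (at t within {0..1})"
        using sol_D[of 0 0 1 b' 1 0 Y t] sol_D[of 0 0 1 b 1 0 X t] XP YP t by (intro derivative_intros) auto
      moreover have "abel_rhs 0 0 1 b' 1 0 t (Y t) - abel_rhs 0 0 1 b 1 0 t (X t)
          = (abel_rhs 0 0 1 b 1 0 t (Y t) - abel_rhs 0 0 1 b 1 0 t (X t)) + (b' - b) * Y t ^ 2"
        by (simp add: rhs_eq trig_def algebra_simps)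
      moreover have "abel_rhs 0 0 1 b 1 0 t (Y t) - abel_rhs 0 0 1 b 1 0 t (X t) = G t * (Y t - X t)"
        unfolding rhs_diff G_def ..
      ultimately show ?thesis by simp
    qed
    have Gc: "continuous_on {0..1} G" unfolding G_def using Xc Yc by (intro continuous_intros)
    have GL: "\<bar>G t\<bar> \<le> 10" if t: "t \<in> {0..1}" for t
    proof -
      have "\<bar>Y t\<bar> \<le> 1" "\<bar>X t\<bar> \<le> 1" using XP YP t \<xi>1 by fastforce+
      moreover have "\<bar>trig 0 0 1 t\<bar> \<le> 2" "\<bar>trig b 1 0 t\<bar> \<le> 2" using trig_bound[of 0 0 1 t] trig_bound[of b 1 0 t] b by auto
      ultimately have "\<bar>G t\<bar> \<le> 3 * 2 * 1^2 + 2 * 2 * 1" unfolding G_def by (intro poly_bound)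
      then show ?thesis by simp
    qed
    have z0: "(\<lambda>t. Y t - X t) 0 = 0" using XP YP by simp
    have rl: "lo \<le> (b' - b) * Y t ^ 2" if t: "t \<in> {0..1}" for t
    proof -
      have "\<xi>/2 \<le> Y t" using YP t by blast
      then have "(\<xi>/2)^2 \<le> Y t ^ 2" using \<xi> by (intro power_mono) auto
      then show ?thesis unfolding lo using bb by (intro mult_left_mono) (auto simp: power_divide)
    qed
    have rh: "(b' - b) * Y t ^ 2 \<le> hi" if t: "t \<in> {0..1}" for t
    proof -
      have "Y t \<le> 2 * \<xi>" "\<xi>/2 \<le> Y t" using YP t by blast+
      then have "Y t ^ 2 \<le> (2 * \<xi>)^2" using \<xi> by (intro power_mono) auto
      then show ?thesis unfolding hi using bb by (intro mult_left_mono) (auto simp: power_mult_distrib)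
    qed
    have lo0: "0 \<le> lo" unfolding lo using bb by simp
    show "lo * exp (- 2 * 10) \<le> (\<lambda>t. Y t - X t) 1" "(\<lambda>t. Y t - X t) 1 \<le> hi * exp (2 * 10)"
      using var_const_bounds[of "\<lambda>t. Y t - X t" G "\<lambda>t. (b' - b) * Y t ^ 2" 10 lo hi, OF d Gc GL z0 rl rh lo0] by auto
  qed
  have eq: "(\<lambda>t. Y t - X t) 1 = cg b' \<xi> - cg b \<xi>"
    using cg_cX[OF b \<xi>] cg_cX[OF b' \<xi>] by (simp add: X_def Y_def)
  show "(b' - b) * (\<xi>^2 / 4) * exp (- 20) \<le> cg b' \<xi> - cg b \<xi>" using bounds(1)[OF refl refl] eq by simp
  show "cg b' \<xi> - cg b \<xi> \<le> (b' - b) * (4 * \<xi>^2) * exp 20" using bounds(2)[OF refl refl] eq by simp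
qed

definition "cC3 = 8 + 3 * cD1"
definition "cc4 = 8 * cC3 * exp 20"
definition "c\<xi>1 = min c\<xi>0 (1 / cc4)"

lemma cC3_pos: "cC3 > 0"
proof -
  have "(0::real) < exp 15 ^ 3" by simp
  then show ?thesis unfolding cC3_def cD1_def cE_def by linarith
qed
lemma cc4_pos: "cc4 > 0" using cC3_pos by (simp add: cc4_def)
lemma c\<xi>1_pos: "c\<xi>1 > 0" using c\<xi>0_pos cc4_pos by (simp add: c\<xi>1_def)
lemma c\<xi>1_le: "c\<xi>1 \<le> c\<xi>0" by (simp add: c\<xi>1_def)

lemma c_g0:
  assumes \<xi>: "0 < \<xi>" "\<xi> < c\<xi>0"
  shows "\<bar>cg 0 \<xi>\<bar> \<le> cC3 * \<xi>^3"
proof -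
  define X where "X = cX 0 \<xi>"
  have XP: "solc 0 X \<and> X 0 = \<xi> \<and> (\<forall>t\<in>{0..1}. \<bar>X t - \<xi>\<bar> \<le> cD1 * \<xi>^2 \<and> \<xi>/2 \<le> X t \<and> X t \<le> 2 * \<xi>)"
    using cX[of 0 \<xi>] \<xi> unfolding X_def by auto
  have Xc: "continuous_on {0..1} X" using sol_cont XP by blast
  have I1: "((\<lambda>t. abel_rhs 0 0 1 0 1 0 t (X t)) has_integral X 1 - X 0) {0..1}"
    by (rule ftc_real) (use sol_D XP in auto)
  have I2: "((\<lambda>t. \<xi>^2 * trig 0 1 0 t) has_integral \<xi>^2 * 0) {0..1}"
    by (intro has_integral_mult_right trig_integral)
  have "((\<lambda>t. abel_rhs 0 0 1 0 1 0 t (X t) - \<xi>^2 * trig 0 1 0 t) has_integral (X 1 - X 0) - \<xi>^2 * 0) {0..1}"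
    by (rule has_integral_diff[OF I1 I2])
  then have eqi: "integral {0..1} (\<lambda>t. abel_rhs 0 0 1 0 1 0 t (X t) - \<xi>^2 * trig 0 1 0 t) = cg 0 \<xi>"
    using cg_cX[of 0 \<xi>] \<xi> XP by (simp add: X_def integral_unique)
  have "\<bar>integral {0..1} (\<lambda>t. abel_rhs 0 0 1 0 1 0 t (X t) - \<xi>^2 * trig 0 1 0 t)\<bar> \<le> cC3 * \<xi>^3"
  proof (rule abs_int_const)
    show "continuous_on {0..1} (\<lambda>t. abel_rhs 0 0 1 0 1 0 t (X t) - \<xi>^2 * trig 0 1 0 t)"
      unfolding rhs_eq using Xc by (intro continuous_intros)
    fix t :: real assume t: "t \<in> {0..1}"
    have Xt: "\<bar>X t - \<xi>\<bar> \<le> cD1 * \<xi>^2" "\<xi>/2 \<le> X t" "X t \<le> 2 * \<xi>" using XP t by blast+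
    have eq: "abel_rhs 0 0 1 0 1 0 t (X t) - \<xi>^2 * trig 0 1 0 t = trig 0 0 1 t * X t ^ 3 + trig 0 1 0 t * ((X t - \<xi>) * (X t + \<xi>))"
      by (simp add: rhs_eq trig_def algebra_simps power2_eq_square)
    have s1: "\<bar>trig 0 0 1 t\<bar> \<le> 1" "\<bar>trig 0 1 0 t\<bar> \<le> 1" using trig_bound[of 0 0 1 t] trig_bound[of 0 1 0 t] by auto
    have X0: "0 \<le> X t" using Xt \<xi> by linarith
    have X3: "X t ^ 3 \<le> (2 * \<xi>) ^ 3" by (rule power_mono) (use Xt X0 in auto)
    have "\<bar>trig 0 0 1 t * X t ^ 3\<bar> \<le> 1 * (2 * \<xi>) ^ 3"
      unfolding abs_mult using s1 X0 X3 by (intro mult_mono) (auto simp: power_abs)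
    moreover have "\<bar>trig 0 1 0 t * ((X t - \<xi>) * (X t + \<xi>))\<bar> \<le> 1 * ((cD1 * \<xi>^2) * (3 * \<xi>))"
      unfolding abs_mult using s1 Xt X0 \<xi> by (intro mult_mono) (auto simp: cD1_def cE_def)
    ultimately have "\<bar>abel_rhs 0 0 1 0 1 0 t (X t) - \<xi>^2 * trig 0 1 0 t\<bar> \<le> (2 * \<xi>) ^ 3 + (cD1 * \<xi>^2) * (3 * \<xi>)"
      unfolding eq by (smt (verit))
    also have "\<dots> = cC3 * \<xi>^3" by (simp add: cC3_def algebra_simps power3_eq_cube power2_eq_square)
    finally show "\<bar>abel_rhs 0 0 1 0 1 0 t (X t) - \<xi>^2 * trig 0 1 0 t\<bar> \<le> cC3 * \<xi>^3" .
  qed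
  then show ?thesis using eqi by simp
qed

lemma c_sign:
  assumes \<xi>: "0 < \<xi>" "\<xi> < c\<xi>1"
  shows "cg (cc4 * \<xi>) \<xi> > 0" "cg (- (cc4 * \<xi>)) \<xi> < 0"
proof -
  have \<xi>0: "\<xi> < c\<xi>0" using \<xi> c\<xi>1_le by simp
  have b1: "cc4 * \<xi> \<le> 1"
  proof -
    have "\<xi> \<le> 1 / cc4" using \<xi> by (simp add: c\<xi>1_def)
    then show ?thesis using cc4_pos by (simp add: field_simps)
  qed
  have bpos: "cc4 * \<xi> \<ge> 0" using cc4_pos \<xi> by simp
  have g0: "\<bar>cg 0 \<xi>\<bar> \<le> cC3 * \<xi>^3" by (rule c_g0[OF \<xi>(1) \<xi>0])
  have key: "(cc4 * \<xi>) * (\<xi>^2 / 4) * exp (- 20) = 2 * cC3 * \<xi>^3"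
    by (simp add: cc4_def power3_eq_cube power2_eq_square mult_exp_exp field_simps)
  have "(cc4 * \<xi> - 0) * (\<xi>^2 / 4) * exp (- 20) \<le> cg (cc4 * \<xi>) \<xi> - cg 0 \<xi>"
    by (rule c_rate(1)) (use b1 bpos \<xi> \<xi>0 in auto)
  then have "cg (cc4 * \<xi>) \<xi> \<ge> 2 * cC3 * \<xi>^3 - cC3 * \<xi>^3" using key g0 by simp
  moreover have "cC3 * \<xi>^3 > 0" using cC3_pos \<xi> by simp
  ultimately show "cg (cc4 * \<xi>) \<xi> > 0" by simp
  have "(0 - - (cc4 * \<xi>)) * (\<xi>^2 / 4) * exp (- 20) \<le> cg 0 \<xi> - cg (- (cc4 * \<xi>)) \<xi>"
    by (rule c_rate(1)) (use b1 bpos \<xi> \<xi>0 in auto)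
  then have "cg (- (cc4 * \<xi>)) \<xi> \<le> cC3 * \<xi>^3 - 2 * cC3 * \<xi>^3" using key g0 by simp
  then show "cg (- (cc4 * \<xi>)) \<xi> < 0" using \<open>cC3 * \<xi>^3 > 0\<close> by simp
qed

lemma c_lip:
  assumes b: "\<bar>b\<bar> \<le> 1" and b': "\<bar>b'\<bar> \<le> 1" and \<xi>: "0 < \<xi>" "\<xi> < c\<xi>0"
  shows "\<bar>cg b' \<xi> - cg b \<xi>\<bar> \<le> (4 * \<xi>^2 * exp 20) * \<bar>b' - b\<bar>"
    "(\<xi>^2 / 4 * exp (- 20)) * \<bar>b' - b\<bar> \<le> \<bar>cg b' \<xi> - cg b \<xi>\<bar>"
proof -
  have "\<bar>cg b' \<xi> - cg b \<xi>\<bar> \<le> (4 * \<xi>^2 * exp 20) * \<bar>b' - b\<bar> \<and> (\<xi>^2 / 4 * exp (- 20)) * \<bar>b' - b\<bar> \<le> \<bar>cg b' \<xi> - cg b \<xi>\<bar>"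
  proof (cases "b \<le> b'")
    case True
    note r = c_rate[OF b b' True \<xi>]
    have nn: "0 \<le> (b' - b) * (\<xi>^2 / 4) * exp (- 20)" using True by simp
    have a1: "\<bar>b' - b\<bar> = b' - b" using True by simp
    have a2: "\<bar>cg b' \<xi> - cg b \<xi>\<bar> = cg b' \<xi> - cg b \<xi>" using r(1) nn by simp
    have e1: "(4 * \<xi>^2 * exp 20) * (b' - b) = (b' - b) * (4 * \<xi>^2) * exp 20" by (simp add: algebra_simps)
    have e2: "(\<xi>^2 / 4 * exp (- 20)) * (b' - b) = (b' - b) * (\<xi>^2 / 4) * exp (- 20)" by (simp add: algebra_simps)
    show ?thesis unfolding a1 a2 e1 e2 using r by simp
  next
    case False
    then have bb: "b' \<le> b" by simp
    note r = c_rate[OF b' b bb \<xi>]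
    have nn: "0 \<le> (b - b') * (\<xi>^2 / 4) * exp (- 20)" using bb by simp
    have a1: "\<bar>b' - b\<bar> = b - b'" using bb by simp
    have a2: "\<bar>cg b' \<xi> - cg b \<xi>\<bar> = cg b \<xi> - cg b' \<xi>" using r(1) nn by simp
    have e1: "(4 * \<xi>^2 * exp 20) * (b - b') = (b - b') * (4 * \<xi>^2) * exp 20" by (simp add: algebra_simps)
    have e2: "(\<xi>^2 / 4 * exp (- 20)) * (b - b') = (b - b') * (\<xi>^2 / 4) * exp (- 20)" by (simp add: algebra_simps)
    show ?thesis unfolding a1 a2 e1 e2 using r by simp
  qed
  then show "\<bar>cg b' \<xi> - cg b \<xi>\<bar> \<le> (4 * \<xi>^2 * exp 20) * \<bar>b' - b\<bar>"
    "(\<xi>^2 / 4 * exp (- 20)) * \<bar>b' - b\<bar> \<le> \<bar>cg b' \<xi> - cg b \<xi>\<bar>" by auto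
qed

lemma c_h_ex:
  assumes \<xi>: "0 < \<xi>" "\<xi> < c\<xi>1"
  shows "\<exists>b. \<bar>b\<bar> \<le> cc4 * \<xi> \<and> cg b \<xi> = 0"
proof -
  have \<xi>0: "\<xi> < c\<xi>0" using \<xi> c\<xi>1_le by simp
  have b1: "cc4 * \<xi> \<le> 1"
  proof -
    have "\<xi> \<le> 1 / cc4" using \<xi> by (simp add: c\<xi>1_def)
    then show ?thesis using cc4_pos by (simp add: field_simps)
  qed
  have cont: "continuous_on {- (cc4 * \<xi>)..cc4 * \<xi>} (\<lambda>b. cg b \<xi>)"
  proof (rule lipschitz_on_continuous_on[of "4 * \<xi>^2 * exp 20"], rule lipschitz_onI)
    fix x y assume "x \<in> {- (cc4 * \<xi>)..cc4 * \<xi>}" "y \<in> {- (cc4 * \<xi>)..cc4 * \<xi>}"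
    then have "\<bar>x\<bar> \<le> 1" "\<bar>y\<bar> \<le> 1" using b1 by auto
    from c_lip(1)[OF \<open>\<bar>y\<bar> \<le> 1\<close> \<open>\<bar>x\<bar> \<le> 1\<close> \<xi>(1) \<xi>0]
    show "dist (cg x \<xi>) (cg y \<xi>) \<le> 4 * \<xi>^2 * exp 20 * dist x y" by (simp add: dist_real_def)
  qed simp
  have "\<exists>b\<ge>- (cc4 * \<xi>). b \<le> cc4 * \<xi> \<and> cg b \<xi> = 0"
    by (rule IVT') (use c_sign[OF \<xi>] cc4_pos \<xi> cont in auto)
  then show ?thesis by (auto simp: abs_le_iff)
qed

lemma c_h_uniq:
  assumes b: "\<bar>b\<bar> \<le> 1" and b': "\<bar>b'\<bar> \<le> 1" and \<xi>: "0 < \<xi>" "\<xi> < c\<xi>0"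
    and z: "cg b \<xi> = 0" "cg b' \<xi> = 0"
  shows "b = b'"
proof -
  have Q: "(\<xi>^2 / 4 * exp (- 20)) * \<bar>b' - b\<bar> \<le> 0" using c_lip(2)[OF b b' \<xi>] z by simp
  have P: "\<xi>^2 / 4 * exp (- 20) > 0" using \<xi> by simp
  have "\<bar>b' - b\<bar> \<le> 0"
  proof (rule ccontr)
    assume "\<not> \<bar>b' - b\<bar> \<le> 0"
    then have "\<bar>b' - b\<bar> > 0" by simp
    from mult_pos_pos[OF P this] Q show False by linarith
  qed
  then show ?thesis by simp
qed

definition "ch \<xi> = (SOME b. \<bar>b\<bar> \<le> cc4 * \<xi> \<and> cg b \<xi> = 0)"

lemma ch:
  assumes "0 < \<xi>" "\<xi> < c\<xi>1"
  shows "\<bar>ch \<xi>\<bar> \<le> cc4 * \<xi>" "cg (ch \<xi>) \<xi> = 0" "\<bar>ch \<xi>\<bar> \<le> 1"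
proof -
  from someI_ex[OF c_h_ex[OF assms]] show 1: "\<bar>ch \<xi>\<bar> \<le> cc4 * \<xi>" "cg (ch \<xi>) \<xi> = 0" unfolding ch_def by auto
  have "\<xi> \<le> 1 / cc4" using assms by (simp add: c\<xi>1_def)
  then have "cc4 * \<xi> \<le> 1" using cc4_pos by (simp add: field_simps)
  then show "\<bar>ch \<xi>\<bar> \<le> 1" using 1 by simp
qed

lemma partc:
  "\<exists>a0 a1 a2 b0 b1 b2 :: real. \<exists>x y.
      abel_periodic_orbit a0 a1 a2 b0 b1 b2 x \<and> nonzero_orbit x \<and>
      abel_hyperbolic a0 a1 a2 b0 b1 b2 (x 0) \<and>
      abel_periodic_orbit a0 a1 a2 b0 b1 b2 y \<and> nonzero_orbit y \<and>
      abel_hyperbolic a0 a1 a2 b0 b1 b2 (y 0) \<and>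
      x 0 \<noteq> y 0"
proof (rule ccontr)
  assume neg: "\<not> ?thesis"
  have D1: "(Pc b has_real_derivative 1) (at \<xi>)"
    if b: "\<bar>b\<bar> \<le> 1" and \<xi>: "0 < \<xi>" "\<xi> < c\<xi>0" and z: "cg b \<xi> = 0" for b \<xi>
  proof -
    define X where "X = cX b \<xi>"
    have XP: "solc b X" "X 0 = \<xi>" using cX[OF b \<xi>] X_def by auto
    have X1: "X 1 = \<xi>" using cg_cX[OF b \<xi>] z X_def by simp
    define M where "M = integral {0..1} (\<lambda>t. 3 * trig 0 0 1 t * X t ^ 2 + 2 * trig b 1 0 t * X t)"
    have dX: "(Pc b has_real_derivative exp M) (at \<xi>)"
      using poincare_deriv[of 0 0 1 b 1 0 X, OF XP(1)] XP(2) by (simp add: M_def)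
    have "exp M = 1"
    proof (rule ccontr)
      assume ne: "exp M \<noteq> 1"
      then have M0: "M \<noteq> 0" by auto
      define U where "U = (\<lambda>t. - X (1 - t))"
      have US: "solc b U" unfolding U_def by (rule mirror_sol[OF XP(1)])
      have U0: "U 0 = - \<xi>" "U 1 = - \<xi>" using XP X1 by (simp_all add: U_def)
      have I: "integral {0..1} (\<lambda>t. 3 * trig 0 0 1 t * U t ^ 2 + 2 * trig b 1 0 t * U t) = - M"
        unfolding U_def M_def by (rule mirror_M[OF XP(1)])
      have dU: "(Pc b has_real_derivative exp (- M)) (at (U 0))"
        using poincare_deriv[of 0 0 1 b 1 0 U, OF US] unfolding I .
      have hX: "abel_hyperbolic 0 0 1 b 1 0 (X 0)"
        unfolding abel_hyperbolic_def using dX ne XP(2) by auto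
      have hU: "abel_hyperbolic 0 0 1 b 1 0 (U 0)"
      proof -
        have "exp (- M) \<noteq> 1" using M0 by simp
        then show ?thesis unfolding abel_hyperbolic_def using dU by blast
      qed
      have "abel_periodic_orbit 0 0 1 b 1 0 X \<and> nonzero_orbit X \<and> abel_hyperbolic 0 0 1 b 1 0 (X 0) \<and>
            abel_periodic_orbit 0 0 1 b 1 0 U \<and> nonzero_orbit U \<and> abel_hyperbolic 0 0 1 b 1 0 (U 0) \<and> X 0 \<noteq> U 0"
        unfolding abel_periodic_orbit_def nonzero_orbit_def
        using XP X1 US U0 hX hU \<xi> by (auto intro!: bexI[of _ 0])
      then show False using neg by blast
    qed
    then show ?thesis using dX by simp
  qed
  have hd: "(ch has_real_derivative 0) (at \<xi>0)" if \<xi>0: "0 < \<xi>0" "\<xi>0 < c\<xi>1" for \<xi>0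
  proof -
    define h0 where "h0 = ch \<xi>0"
    have hP: "\<bar>h0\<bar> \<le> 1" "cg h0 \<xi>0 = 0" using ch[OF \<xi>0] h0_def by auto
    have \<xi>00: "\<xi>0 < c\<xi>0" using \<xi>0 c\<xi>1_le by simp
    have P0: "(Pc h0 has_real_derivative 1) (at \<xi>0)" by (rule D1[OF hP(1) \<xi>0(1) \<xi>00 hP(2)])
    have Pxi: "Pc h0 \<xi>0 = \<xi>0" using hP(2) by (simp add: cg_def)
    have L0: "((\<lambda>\<xi>. (Pc h0 \<xi> - Pc h0 \<xi>0) / (\<xi> - \<xi>0) - 1) \<longlongrightarrow> 1 - 1) (at \<xi>0)"
      using P0 unfolding has_field_derivative_iff by (intro tendsto_intros)
    have L1: "((\<lambda>\<xi>. cg h0 \<xi> / (\<xi> - \<xi>0)) \<longlongrightarrow> 0) (at \<xi>0)"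
    proof (rule Lim_transform_eventually[OF L0[simplified]])
      have "\<forall>\<^sub>F \<xi> in at \<xi>0. \<xi> \<noteq> \<xi>0" by (simp add: eventually_at_filter)
      then show "\<forall>\<^sub>F \<xi> in at \<xi>0. (Pc h0 \<xi> - Pc h0 \<xi>0) / (\<xi> - \<xi>0) - 1 = cg h0 \<xi> / (\<xi> - \<xi>0)"
        by eventually_elim (simp add: Pxi cg_def field_simps)
    qed
    define Kc where "Kc = 16 * exp 20 / \<xi>0^2"
    define d where "d = min (\<xi>0/2) (c\<xi>1 - \<xi>0)"
    have d0: "d > 0" using \<xi>0 by (simp add: d_def)
    have ev: "\<forall>\<^sub>F \<xi> in at \<xi>0. norm ((ch \<xi> - ch \<xi>0) / (\<xi> - \<xi>0)) \<le> Kc * \<bar>cg h0 \<xi> / (\<xi> - \<xi>0)\<bar>"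
      unfolding eventually_at
    proof (intro exI[of _ d] conjI d0 ballI impI)
      fix \<xi> :: real assume "\<xi> \<in> UNIV" and dist: "\<xi> \<noteq> \<xi>0 \<and> dist \<xi> \<xi>0 < d"
      then have ne: "\<xi> \<noteq> \<xi>0" and x1: "\<xi>0/2 < \<xi>" and x2: "\<xi> < c\<xi>1"
        by (auto simp: d_def dist_real_def abs_if split: if_splits)
      have \<xi>pos: "0 < \<xi>" using x1 \<xi>0 by simp
      have x3: "\<xi> < c\<xi>0" using x2 c\<xi>1_le by simp
      have chP: "\<bar>ch \<xi>\<bar> \<le> 1" "cg (ch \<xi>) \<xi> = 0" using ch[OF \<xi>pos x2] by auto
      have c0: "\<xi>^2 / 4 * exp (- 20) > 0" using \<xi>pos by simp
      have "(\<xi>^2 / 4 * exp (- 20)) * \<bar>ch \<xi> - h0\<bar> \<le> \<bar>cg (ch \<xi>) \<xi> - cg h0 \<xi>\<bar>"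
        by (rule c_lip(2)[OF hP(1) chP(1) \<xi>pos x3])
      then have "(\<xi>^2 / 4 * exp (- 20)) * \<bar>ch \<xi> - h0\<bar> \<le> \<bar>cg h0 \<xi>\<bar>" using chP(2) by simp
      then have "\<bar>ch \<xi> - h0\<bar> \<le> \<bar>cg h0 \<xi>\<bar> / (\<xi>^2 / 4 * exp (- 20))"
        using c0 by (simp add: pos_le_divide_eq mult.commute)
      also have "\<dots> = \<bar>cg h0 \<xi>\<bar> * (16 * exp 20 / (4 * \<xi>^2))"
        by (simp add: exp_minus field_simps)
      also have "\<dots> \<le> \<bar>cg h0 \<xi>\<bar> * Kc"
      proof (intro mult_left_mono)
        have "\<xi>0^2 \<le> (2 * \<xi>)^2" using x1 \<xi>0 by (intro power_mono) auto
        then have "\<xi>0^2 \<le> 4 * \<xi>^2" by (simp add: power_mult_distrib)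
        then show "16 * exp 20 / (4 * \<xi>^2) \<le> Kc" unfolding Kc_def using \<xi>0 \<xi>pos by (intro divide_left_mono) auto
      qed simp
      finally have num: "\<bar>ch \<xi> - h0\<bar> \<le> Kc * \<bar>cg h0 \<xi>\<bar>" by (simp add: mult.commute)
      have "\<bar>(ch \<xi> - h0) / (\<xi> - \<xi>0)\<bar> = \<bar>ch \<xi> - h0\<bar> / \<bar>\<xi> - \<xi>0\<bar>" by (simp add: abs_divide)
      also have "\<dots> \<le> Kc * \<bar>cg h0 \<xi>\<bar> / \<bar>\<xi> - \<xi>0\<bar>" by (rule divide_right_mono[OF num]) simp
      also have "\<dots> = Kc * \<bar>cg h0 \<xi> / (\<xi> - \<xi>0)\<bar>" by (simp add: abs_divide)
      finally show "norm ((ch \<xi> - ch \<xi>0) / (\<xi> - \<xi>0)) \<le> Kc * \<bar>cg h0 \<xi> / (\<xi> - \<xi>0)\<bar>"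
        by (simp add: h0_def)
    qed
    have "((\<lambda>\<xi>. (ch \<xi> - ch \<xi>0) / (\<xi> - \<xi>0)) \<longlongrightarrow> 0) (at \<xi>0)"
    proof (rule Lim_null_comparison[OF ev])
      have "((\<lambda>\<xi>. Kc * \<bar>cg h0 \<xi> / (\<xi> - \<xi>0)\<bar>) \<longlongrightarrow> Kc * \<bar>0\<bar>) (at \<xi>0)"
        by (intro tendsto_intros L1)
      then show "((\<lambda>\<xi>. Kc * \<bar>cg h0 \<xi> / (\<xi> - \<xi>0)\<bar>) \<longlongrightarrow> 0) (at \<xi>0)" by simp
    qed
    then show ?thesis unfolding has_field_derivative_iff by simp
  qed
  have "\<exists>c. \<forall>x\<in>{0<..<c\<xi>1}. ch x = c"
  proof (rule has_field_derivative_zero_constant)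
    show "convex {0<..<c\<xi>1}" by (rule convex_real_interval)
    fix x assume "x \<in> {0<..<c\<xi>1}"
    then show "(ch has_real_derivative 0) (at x within {0<..<c\<xi>1})"
      using hd by (auto intro: has_field_derivative_at_within)
  qed
  then obtain k where k: "\<forall>\<xi>\<in>{0<..<c\<xi>1}. ch \<xi> = k" by blast
  have k0: "k = 0"
  proof (rule small_zero[OF c\<xi>1_pos, of cc4])
    show "cc4 \<ge> 0" using cc4_pos by simp
    fix \<xi> :: real assume \<xi>: "0 < \<xi>" "\<xi> < c\<xi>1"
    then show "\<bar>k\<bar> \<le> cc4 * \<xi>" using ch(1)[OF \<xi>] k by auto
  qed
  have g0: "cg 0 \<xi> = 0" if \<xi>: "0 < \<xi>" "\<xi> < c\<xi>1" for \<xi>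
    using ch(2)[OF \<xi>] k k0 \<xi> by auto
  have per: "abel_periodic_orbit 0 0 1 0 1 0 (cX 0 \<xi>) \<and> cX 0 \<xi> 0 = \<xi>" if \<xi>: "0 < \<xi>" "\<xi> < c\<xi>1" for \<xi>
  proof -
    have \<xi>0: "\<xi> < c\<xi>0" using \<xi> c\<xi>1_le by simp
    have XP: "solc 0 (cX 0 \<xi>)" "cX 0 \<xi> 0 = \<xi>" using cX[of 0 \<xi>] \<xi> \<xi>0 by auto
    have "cX 0 \<xi> 1 = \<xi>" using cg_cX[of 0 \<xi>] g0[OF \<xi>] \<xi> \<xi>0 by simp
    then show ?thesis using XP by (simp add: abel_periodic_orbit_def)
  qed
  have "abel_center 0 0 1 0 1 0"
    unfolding abel_center_def
  proof (intro exI[of _ c\<xi>1] conjI c\<xi>1_pos allI impI)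
    fix x0 :: real assume x0: "\<bar>x0\<bar> < c\<xi>1"
    show "\<exists>x. abel_periodic_orbit 0 0 1 0 1 0 x \<and> x 0 = x0"
    proof (cases "x0 > 0")
      case True then show ?thesis using per[of x0] x0 by auto
    next
      case False
      show ?thesis
      proof (cases "x0 = 0")
        case True then show ?thesis
          using sol_zero[of 0 0 1 0 1 0] by (intro exI[of _ "\<lambda>t. 0"]) (simp add: abel_periodic_orbit_def)
      next
        case False
        then have xn: "0 < - x0" "- x0 < c\<xi>1" using \<open>\<not> x0 > 0\<close> x0 by auto
        define X where "X = cX 0 (- x0)"
        have XP: "solc 0 X" "X 0 = - x0" "X 1 = - x0"
          using per[OF xn] unfolding X_def abel_periodic_orbit_def by auto
        have "solc 0 (\<lambda>t. - X (1 - t))" by (rule mirror_sol[OF XP(1)])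
        then show ?thesis using XP
          by (intro exI[of _ "\<lambda>t. - X (1 - t)"]) (simp add: abel_periodic_orbit_def)
      qed
    qed
  qed
  from center_imp[OF this] show False by simp
qed

theorem theoremB:
  shows
  "(\<forall>a0 a1 a2 b0 b1 b2 :: real.
      abel_center a0 a1 a2 b0 b1 b2 \<longleftrightarrow> (a0 = 0 \<and> b0 = 0 \<and> a2 * b1 - a1 * b2 = 0))
   \<and>
   (\<forall>a0 a1 a2 b0 b1 b2 :: real.
      \<not> abel_center a0 a1 a2 b0 b1 b2 \<and>
      (a0\<^sup>2 \<ge> a1\<^sup>2 + a2\<^sup>2 \<or> b0\<^sup>2 \<ge> b1\<^sup>2 + b2\<^sup>2 \<or>
       (a2 * b0 - a0 * b2)\<^sup>2 + (a0 * b1 - a1 * b0)\<^sup>2 \<ge> (a2 * b1 - a1 * b2)\<^sup>2)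
      \<longrightarrow>
      (\<forall>x y. abel_periodic_orbit a0 a1 a2 b0 b1 b2 x \<and> nonzero_orbit x \<and>
             abel_periodic_orbit a0 a1 a2 b0 b1 b2 y \<and> nonzero_orbit y
             \<longrightarrow> (\<forall>t\<in>{0..1}. x t = y t))
      \<and>
      (\<forall>x. abel_periodic_orbit a0 a1 a2 b0 b1 b2 x \<and> nonzero_orbit x
             \<longrightarrow> abel_hyperbolic a0 a1 a2 b0 b1 b2 (x 0)))
   \<and>
   (\<exists>a0 a1 a2 b0 b1 b2 :: real. \<exists>x y.
      abel_periodic_orbit a0 a1 a2 b0 b1 b2 x \<and> nonzero_orbit x \<and>
      abel_hyperbolic a0 a1 a2 b0 b1 b2 (x 0) \<and>
      abel_periodic_orbit a0 a1 a2 b0 b1 b2 y \<and> nonzero_orbit y \<and>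
      abel_hyperbolic a0 a1 a2 b0 b1 b2 (y 0) \<and>
      x 0 \<noteq> y 0)"
proof (intro conjI)
  show "\<forall>a0 a1 a2 b0 b1 b2 :: real.
      abel_center a0 a1 a2 b0 b1 b2 \<longleftrightarrow> (a0 = 0 \<and> b0 = 0 \<and> a2 * b1 - a1 * b2 = 0)"
  proof (intro allI)
    fix a0 a1 a2 b0 b1 b2 :: real
    show "abel_center a0 a1 a2 b0 b1 b2 \<longleftrightarrow> (a0 = 0 \<and> b0 = 0 \<and> a2 * b1 - a1 * b2 = 0)"
      using center_if[of a0 b0 a2 b1 a1 b2] center_imp[of a0 a1 a2 b0 b1 b2] by blast
  qed
next
  show "\<forall>a0 a1 a2 b0 b1 b2 :: real.
      \<not> abel_center a0 a1 a2 b0 b1 b2 \<and>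
      (a0\<^sup>2 \<ge> a1\<^sup>2 + a2\<^sup>2 \<or> b0\<^sup>2 \<ge> b1\<^sup>2 + b2\<^sup>2 \<or>
       (a2 * b0 - a0 * b2)\<^sup>2 + (a0 * b1 - a1 * b0)\<^sup>2 \<ge> (a2 * b1 - a1 * b2)\<^sup>2)
      \<longrightarrow>
      (\<forall>x y. abel_periodic_orbit a0 a1 a2 b0 b1 b2 x \<and> nonzero_orbit x \<and>
             abel_periodic_orbit a0 a1 a2 b0 b1 b2 y \<and> nonzero_orbit y
             \<longrightarrow> (\<forall>t\<in>{0..1}. x t = y t))
      \<and>
      (\<forall>x. abel_periodic_orbit a0 a1 a2 b0 b1 b2 x \<and> nonzero_orbit x
             \<longrightarrow> abel_hyperbolic a0 a1 a2 b0 b1 b2 (x 0))"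
  proof (intro allI impI)
    fix a0 a1 a2 b0 b1 b2 :: real
    assume H: "\<not> abel_center a0 a1 a2 b0 b1 b2 \<and>
      (a0\<^sup>2 \<ge> a1\<^sup>2 + a2\<^sup>2 \<or> b0\<^sup>2 \<ge> b1\<^sup>2 + b2\<^sup>2 \<or>
       (a2 * b0 - a0 * b2)\<^sup>2 + (a0 * b1 - a1 * b0)\<^sup>2 \<ge> (a2 * b1 - a1 * b2)\<^sup>2)"
    have nc: "\<not> (a0 = 0 \<and> b0 = 0 \<and> a2 * b1 - a1 * b2 = 0)"
      using H center_if[of a0 b0 a2 b1 a1 b2] by blast
    from partb[OF nc] H
    show "(\<forall>x y. abel_periodic_orbit a0 a1 a2 b0 b1 b2 x \<and> nonzero_orbit x \<and>
             abel_periodic_orbit a0 a1 a2 b0 b1 b2 y \<and> nonzero_orbit y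
             \<longrightarrow> (\<forall>t\<in>{0..1}. x t = y t))
      \<and>
      (\<forall>x. abel_periodic_orbit a0 a1 a2 b0 b1 b2 x \<and> nonzero_orbit x
             \<longrightarrow> abel_hyperbolic a0 a1 a2 b0 b1 b2 (x 0))"
      by blast
  qed
next
  show "\<exists>a0 a1 a2 b0 b1 b2 :: real. \<exists>x y.
      abel_periodic_orbit a0 a1 a2 b0 b1 b2 x \<and> nonzero_orbit x \<and>
      abel_hyperbolic a0 a1 a2 b0 b1 b2 (x 0) \<and>
      abel_periodic_orbit a0 a1 a2 b0 b1 b2 y \<and> nonzero_orbit y \<and>
      abel_hyperbolic a0 a1 a2 b0 b1 b2 (y 0) \<and>
      x 0 \<noteq> y 0"
    by (rule partc)
qed

end
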